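(* Assume the setting below and that the ranking probabilities form a dual culture: $p_r=p_{r'}$ whenever ranking $r'$ is the reversal of ranking $r$; assume also that every correlation matrix $R_i$ is well defined. Then $\lambda_{ij}=0$ for all $i\ne j$, and $$\lim_{n\to\infty}P(n,m)=\sum_{i=1}^m L(0,0,\dots,0;R_i),$$ where each $L$ has $m-1$ zero arguments, i.e. each term is the positive orthant probability of an $(m-1)$-dimensional centered normal vector with correlation matrix $R_i$.
   Context: There are $m\ge 2$ candidates $C_1,\dots,C_m$ and $K=m!$ strict rankings, indexed $r=1,\dots,K$. Each of $n$ voters independently chooses ranking $r$ with probability $p_r$; $N_r$ is the number of voters choosing $r$. For $i\ne j$, $a_{r,(i,j)}=1$ if ranking $r$ places $C_i$ above $C_j$, else $-1$. $C_i$ is a Condorcet winner if $\sum_r a_{r,(i,j)}N_r\ge1$ for all $j\ne i$; $P(n,m)$ is the probability that some candidate is a Condorcet winner. $\lambda_{ij}=\sum_r a_{r,(i,j)}p_r$. For distinct $i,j,l$, $a_{r,(i,j),l}=1$ if in ranking $r$ $C_i$ is above both $C_j,C_l$ or below both, else $-1$; $R^{(i)}_{jl}=(\sum_r a_{r,(i,j),l}p_r-\lambda_{ij}\lambda_{il})/\sqrt{(1-\lambda_{ij}^2)(1-\lambda_{il}^2)}$, $R^{(i)}_{jj}=1$, $R_i=(R^{(i)}_{jl})_{j,l\ne i}$. $L(0,\dots,0;R)=P(Z_1\ge0,\dots,Z_d\ge0)$ for $Z\sim N(0,R)$. *)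

theory Defs
  imports "HOL-Probability.Probability" "HOL-Combinatorics.Permutations"
begin

text \<open>Candidates are 0,...,m-1. A strict ranking is a permutation sigma of {..<m};
  sigma i is the position of candidate i (smaller position = ranked higher).\<close>

definition rankings :: "nat \<Rightarrow> (nat \<Rightarrow> nat) set" where
  "rankings m = {\<sigma>. \<sigma> permutes {..<m}}"

definition rev_rank :: "nat \<Rightarrow> (nat \<Rightarrow> nat) \<Rightarrow> (nat \<Rightarrow> nat)" where
  "rev_rank m \<sigma> = (\<lambda>i. if i < m then m - 1 - \<sigma> i else i)"

definition pref :: "(nat \<Rightarrow> nat) \<Rightarrow> nat \<Rightarrow> nat \<Rightarrow> real" where
  "pref \<sigma> i j = (if \<sigma> i < \<sigma> j then 1 else -1)"

definition pref3 :: "(nat \<Rightarrow> nat) \<Rightarrow> nat \<Rightarrow> nat \<Rightarrow> nat \<Rightarrow> real" where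
  "pref3 \<sigma> i j l =
     (if (\<sigma> i < \<sigma> j \<and> \<sigma> i < \<sigma> l) \<or> (\<sigma> j < \<sigma> i \<and> \<sigma> l < \<sigma> i) then 1 else -1)"

definition Ncount :: "nat \<Rightarrow> (nat \<Rightarrow> (nat \<Rightarrow> nat)) \<Rightarrow> (nat \<Rightarrow> nat) \<Rightarrow> nat" where
  "Ncount n v \<sigma> = card {k \<in> {..<n}. v k = \<sigma>}"

definition condorcet_winner :: "nat \<Rightarrow> nat \<Rightarrow> (nat \<Rightarrow> (nat \<Rightarrow> nat)) \<Rightarrow> nat \<Rightarrow> bool" where
  "condorcet_winner n m v i \<longleftrightarrow>
     (\<forall>j<m. j \<noteq> i \<longrightarrow> (\<Sum>\<sigma>\<in>rankings m. pref \<sigma> i j * real (Ncount n v \<sigma>)) \<ge> 1)"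

definition Pcw :: "((nat \<Rightarrow> nat) \<Rightarrow> real) \<Rightarrow> nat \<Rightarrow> nat \<Rightarrow> real" where
  "Pcw p n m =
     (\<Sum>v\<in>Pi\<^sub>E {..<n} (\<lambda>_. rankings m).
        (\<Prod>k<n. p (v k)) * (if \<exists>i<m. condorcet_winner n m v i then 1 else 0))"

definition lam :: "((nat \<Rightarrow> nat) \<Rightarrow> real) \<Rightarrow> nat \<Rightarrow> nat \<Rightarrow> nat \<Rightarrow> real" where
  "lam p m i j = (\<Sum>\<sigma>\<in>rankings m. pref \<sigma> i j * p \<sigma>)"

text \<open>The correlation matrix R_i, indexed by j,l in {..<m} - {i}.\<close>
definition Rmat :: "((nat \<Rightarrow> nat) \<Rightarrow> real) \<Rightarrow> nat \<Rightarrow> nat \<Rightarrow> nat \<Rightarrow> nat \<Rightarrow> real" where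
  "Rmat p m i j l =
     (if j = l then 1
      else ((\<Sum>\<sigma>\<in>rankings m. pref3 \<sigma> i j l * p \<sigma>) - lam p m i j * lam p m i l)
           / sqrt ((1 - (lam p m i j)\<^sup>2) * (1 - (lam p m i l)\<^sup>2)))"

text \<open>Centered normal vector Z indexed by finite set J with covariance matrix R:
  Z = A W with W standard normal on J and A A^T = R. The orthant probability
  L(0,...,0;R) = P(Z_j >= 0 for all j in J); it does not depend on the choice of A.\<close>
definition std_gauss :: "nat set \<Rightarrow> (nat \<Rightarrow> real) measure" where
  "std_gauss J = PiM J (\<lambda>_. density lborel std_normal_density)"

definition orthant_prob :: "nat set \<Rightarrow> (nat \<Rightarrow> nat \<Rightarrow> real) \<Rightarrow> real" where
  "orthant_prob J R =
     (let A = (SOME A :: nat \<Rightarrow> nat \<Rightarrow> real.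
                 \<forall>j\<in>J. \<forall>l\<in>J. (\<Sum>k\<in>J. A j k * A l k) = R j l)
      in measure (std_gauss J)
           {w \<in> space (std_gauss J). \<forall>j\<in>J. (\<Sum>k\<in>J. A j k * w k) \<ge> 0})"

end

theory Submission
  imports Defs
begin

lemma cis_sum: "finite J \<Longrightarrow> cis (\<Sum>k\<in>J. f k) = (\<Prod>k\<in>J. cis (f k))"
  by (induction J rule: finite_induct) (auto simp: cis_mult[symmetric] add.commute)

lemma prob_space_std_gauss: "prob_space (std_gauss J)"
  unfolding std_gauss_def
  by (intro prob_space_PiM) (simp add: real_dist_normal_dist real_distribution.axioms(1))

lemma gauss_char:
  assumes J: "finite J"
  shows "(\<integral>w. cis (\<Sum>k\<in>J. c k * w k) \<partial>std_gauss J) = complex_of_real (exp (-(\<Sum>k\<in>J. (c k)^2)/2))"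
proof -
  interpret N: prob_space std_normal_distribution
    by (simp add: real_dist_normal_dist real_distribution.axioms(1))
  interpret P: product_prob_space "\<lambda>_. std_normal_distribution" ..
  have "(\<integral>w. cis (\<Sum>k\<in>J. c k * w k) \<partial>std_gauss J)
      = (\<integral>w. (\<Prod>k\<in>J. cis (c k * w k)) \<partial>Pi\<^sub>M J (\<lambda>_. std_normal_distribution))"
    unfolding std_gauss_def using J by (simp add: cis_sum)
  also have "\<dots> = (\<Prod>k\<in>J. integral\<^sup>L std_normal_distribution (\<lambda>x. cis (c k * x)))"
    using J by (intro P.product_integral_prod) (auto intro!: N.integrable_const_bound[where B=1] borel_measurable_continuous_onI continuous_intros)
  also have "\<dots> = (\<Prod>k\<in>J. char std_normal_distribution (c k))"
    by (simp add: char_def cis_conv_exp)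
  also have "\<dots> = (\<Prod>k\<in>J. complex_of_real (exp (- ((c k)^2)/2)))"
    by (simp add: char_std_normal_distribution)
  also have "\<dots> = complex_of_real (exp (-(\<Sum>k\<in>J. (c k)^2)/2))"
    using J by (simp add: exp_sum[symmetric] sum_negf sum_divide_distrib[symmetric] flip: of_real_prod)
  finally show ?thesis .
qed

lemma lin_meas[measurable]: "(\<lambda>w. \<Sum>k\<in>J. b k * w k) \<in> borel_measurable (std_gauss J)"
  unfolding std_gauss_def by measurable

lemma gauss_lin_normal:
  assumes J: "finite J" and b: "(\<Sum>k\<in>J. (b k)^2) = 1"
  shows "distr (std_gauss J) borel (\<lambda>w. \<Sum>k\<in>J. b k * w k) = std_normal_distribution"
proof (rule Levy_uniqueness)
  interpret G: prob_space "std_gauss J" by (rule prob_space_std_gauss)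
  show "real_distribution (distr (std_gauss J) borel (\<lambda>w. \<Sum>k\<in>J. b k * w k))"
    by (intro G.real_distribution_distr) measurable
  show "real_distribution std_normal_distribution" by (rule real_dist_normal_dist)
  show "char (distr (std_gauss J) borel (\<lambda>w. \<Sum>k\<in>J. b k * w k)) = char std_normal_distribution"
  proof
    fix t
    have "char (distr (std_gauss J) borel (\<lambda>w. \<Sum>k\<in>J. b k * w k)) t
        = (\<integral>w. cis (\<Sum>k\<in>J. (t * b k) * w k) \<partial>std_gauss J)"
      unfolding char_def
      by (subst integral_distr) (auto simp: cis_conv_exp sum_distrib_left mult.assoc)
    also have "\<dots> = complex_of_real (exp (-(\<Sum>k\<in>J. (t * b k)^2)/2))"
      by (rule gauss_char[OF J])
    also have "(\<Sum>k\<in>J. (t * b k)^2) = t^2"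
      using b by (simp add: power_mult_distrib sum_distrib_left[symmetric])
    finally show "char (distr (std_gauss J) borel (\<lambda>w. \<Sum>k\<in>J. b k * w k)) t = char std_normal_distribution t"
      by (simp add: char_std_normal_distribution)
  qed
qed

lemma std_normal_density_le1: "std_normal_density x \<le> 1"
proof -
  have "exp (- x\<^sup>2 / 2) \<le> 1" by simp
  moreover have "1 / sqrt (2 * pi) \<le> 1" using pi_gt3 by (simp add: divide_le_eq real_le_rsqrt)
  ultimately show ?thesis unfolding std_normal_density_def
    by (metis exp_ge_zero mult_le_one zero_le_divide_1_iff real_sqrt_ge_zero pi_ge_zero zero_le_mult_iff zero_le_numeral)
qed

lemma N_interval:
  assumes "a \<le> b"
  shows "measure std_normal_distribution {x. a \<le> x \<and> x < b} \<le> b - a"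
proof -
  have "emeasure std_normal_distribution {x. a \<le> x \<and> x < b}
      = (\<integral>\<^sup>+x. ennreal (std_normal_density x) * indicator {x. a \<le> x \<and> x < b} x \<partial>lborel)"
    by (subst emeasure_density) auto
  also have "\<dots> \<le> (\<integral>\<^sup>+x. indicator {a..<b} x \<partial>lborel)"
    by (intro nn_integral_mono) (auto split: split_indicator simp: std_normal_density_le1)
  also have "\<dots> = ennreal (b - a)" using assms by simp
  finally have "emeasure std_normal_distribution {x. a \<le> x \<and> x < b} \<le> ennreal (b - a)" .
  then show ?thesis
    using assms by (simp add: measure_def enn2real_leI)
qed

lemma N_tail:
  assumes "0 < L"
  shows "measure std_normal_distribution {x. L \<le> \<bar>x\<bar>} \<le> 1 / L^2"
proof -
  have int: "integrable std_normal_distribution (\<lambda>x. x^2)"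
    using std_normal_distribution_even_moments(2)[of 1] by simp
  have m: "(\<integral>x. x^2 \<partial>std_normal_distribution) = 1"
    using std_normal_distribution_even_moments(1)[of 1] by simp
  have "measure std_normal_distribution {x \<in> space std_normal_distribution. L^2 \<le> x^2}
       \<le> (\<integral>x. x^2 \<partial>std_normal_distribution) / L^2"
    using assms by (intro integral_Markov_inequality_measure[OF int]) auto
  moreover have "{x \<in> space std_normal_distribution. L^2 \<le> x^2} = {x. L \<le> \<bar>x\<bar>}"
    using assms by (auto simp: abs_le_square_iff[symmetric])
  ultimately show ?thesis using m by simp
qed

definition En :: "'b set \<Rightarrow> ('b \<Rightarrow> real) \<Rightarrow> nat \<Rightarrow> ((nat \<Rightarrow> 'b) \<Rightarrow> 'c::real_normed_field) \<Rightarrow> 'c" where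
  "En S p n g = (\<Sum>v\<in>PiE {..<n} (\<lambda>_. S). of_real (\<Prod>k<n. p (v k)) * g v)"

definition Yv :: "('b \<Rightarrow> nat \<Rightarrow> real) \<Rightarrow> nat \<Rightarrow> (nat \<Rightarrow> 'b) \<Rightarrow> nat \<Rightarrow> real" where
  "Yv a n v j = (\<Sum>k<n. a (v k) j) / sqrt n"

lemma En_add: "En S p n (\<lambda>v. f v + g v) = En S p n f + En S p n g"
  unfolding En_def by (simp add: distrib_left sum.distrib)

lemma En_diff: "En S p n (\<lambda>v. f v - g v) = En S p n f - En S p n g"
  unfolding En_def by (simp add: right_diff_distrib sum_subtractf)

lemma En_cmult: "En S p n (\<lambda>v. (c::'c::real_normed_field) * f v) = c * En S p n f"
  unfolding En_def by (simp add: sum_distrib_left algebra_simps)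

lemma En_sum: "En S p n (\<lambda>v. \<Sum>i\<in>I. f i v) = (\<Sum>i\<in>I. En S p n (f i))"
  unfolding En_def by (simp add: sum_distrib_left sum.swap[of _ I])

lemma En_prod:
  assumes "finite S"
  shows "En S p n (\<lambda>v. (\<Prod>k<n. f k (v k)) :: 'c::real_normed_field)
       = (\<Prod>k<n. \<Sum>s\<in>S. of_real (p s) * f k s)"
proof -
  have "(\<Prod>k<n. \<Sum>s\<in>S. of_real (p s) * f k s) = (\<Sum>v\<in>PiE {..<n} (\<lambda>_. S). \<Prod>k<n. of_real (p (v k)) * f k (v k))"
    using assms by (subst prod_sum_PiE) auto
  also have "\<dots> = En S p n (\<lambda>v. \<Prod>k<n. f k (v k))"
    unfolding En_def by (simp add: prod.distrib of_real_prod)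
  finally show ?thesis by simp
qed

lemma En_one:
  assumes "finite S" "(\<Sum>s\<in>S. p s) = 1"
  shows "En S p n (\<lambda>v. 1::real) = 1"
  using En_prod[OF assms(1), of p n "\<lambda>_ _. 1::real"] assms(2) by simp

lemma En_mono:
  assumes "\<forall>s\<in>S. p s \<ge> 0" "\<And>v. v \<in> PiE {..<n} (\<lambda>_. S) \<Longrightarrow> f v \<le> g v"
  shows "En S p n f \<le> (En S p n g :: real)"
  unfolding En_def
proof (intro sum_mono mult_left_mono)
  fix v assume v: "v \<in> PiE {..<n} (\<lambda>_. S)"
  show "f v \<le> g v" using assms(2)[OF v] .
  have "0 \<le> (\<Prod>k<n. p (v k))" using assms(1) v by (auto intro!: prod_nonneg)
  then show "0 \<le> (of_real (\<Prod>k<n. p (v k)) :: real)" by simp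
qed

lemma En_abs:
  assumes "\<forall>s\<in>S. p s \<ge> 0"
  shows "norm (En S p n f) \<le> En S p n (\<lambda>v. norm (f v))"
  unfolding En_def
proof (rule order_trans[OF norm_sum], rule sum_mono)
  fix v assume v: "v \<in> PiE {..<n} (\<lambda>_. S)"
  have nn: "0 \<le> (\<Prod>k<n. p (v k))" using assms v by (auto intro!: prod_nonneg)
  show "norm (of_real (\<Prod>k<n. p (v k)) * f v) \<le> of_real (\<Prod>k<n. p (v k)) * norm (f v)"
    by (simp only: norm_mult norm_of_real abs_of_nonneg[OF nn]) (simp add: of_real_def real_scaleR_def)
qed

lemma En_char:
  assumes "finite S"
  shows "En S p n (\<lambda>v. cis (\<Sum>j\<in>J. t j * Yv a n v j))
       = (\<Sum>s\<in>S. complex_of_real (p s) * cis ((\<Sum>j\<in>J. t j * a s j) / sqrt n)) ^ n"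
proof -
  have eq: "cis (\<Sum>j\<in>J. t j * Yv a n v j) = (\<Prod>k<n. cis ((\<Sum>j\<in>J. t j * a (v k) j) / sqrt n))" for v
  proof -
    have "(\<Sum>j\<in>J. t j * Yv a n v j) = (\<Sum>k<n. (\<Sum>j\<in>J. t j * a (v k) j) / sqrt n)"
      unfolding Yv_def by (simp add: sum_divide_distrib[symmetric] sum_distrib_left sum.swap[of _ J])
    then show ?thesis by (simp add: cis_sum)
  qed
  show ?thesis unfolding eq using En_prod[OF assms, of p n "\<lambda>k s. cis ((\<Sum>j\<in>J. t j * a s j) / sqrt n)"] by simp
qed

lemma En_pair:
  assumes S: "finite S" and ps: "(\<Sum>s\<in>S. p s) = 1"
    and a2: "\<forall>s\<in>S. (a s j)^2 = 1" and a0: "(\<Sum>s\<in>S. p s * a s j) = 0"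
    and k: "k < n" and l: "l < n"
  shows "En S p n (\<lambda>v. a (v k) j * a (v l) j) = (if k = l then 1 else 0)"
proof -
  define g where "g k' s = (if k' = k then a s j else 1) * (if k' = l then a s j else 1)" for k' s
  have eq: "a (v k) j * a (v l) j = (\<Prod>k'<n. g k' (v k'))" for v
    unfolding g_def prod.distrib using k l by (simp add: prod.delta)
  have "En S p n (\<lambda>v. a (v k) j * a (v l) j) = (\<Prod>k'<n. \<Sum>s\<in>S. p s * g k' s)"
    unfolding eq using En_prod[OF S, of p n g] by simp
  also have "\<dots> = (if k = l then 1 else 0)"
  proof (cases "k = l")
    case True
    have "(\<Sum>s\<in>S. p s * g k' s) = 1" for k'
    proof -
      have "(\<Sum>s\<in>S. p s * g k' s) = (\<Sum>s\<in>S. p s)"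
        using True a2 by (intro sum.cong) (auto simp: g_def power2_eq_square)
      then show ?thesis using ps by simp
    qed
    then show ?thesis using True by simp
  next
    case False
    have "(\<Sum>s\<in>S. p s * g k s) = 0" using False a0 by (simp add: g_def)
    then have "(\<Prod>k'<n. \<Sum>s\<in>S. p s * g k' s) = 0"
      using k by (intro prod_zero) auto
    then show ?thesis using False by simp
  qed
  finally show ?thesis .
qed

lemma En_second_moment:
  assumes S: "finite S" and ps: "(\<Sum>s\<in>S. p s) = 1"
    and a2: "\<forall>s\<in>S. (a s j)^2 = 1" and a0: "(\<Sum>s\<in>S. p s * a s j) = 0"
  shows "En S p n (\<lambda>v. (Yv a n v j)^2) = (if n = 0 then 0 else 1)"
proof (cases "n = 0")
  case True then show ?thesis by (simp add: Yv_def En_def)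
next
  case False
  have eq: "(Yv a n v j)^2 = (\<Sum>k<n. \<Sum>l<n. a (v k) j * a (v l) j) / real n" for v
  proof -
    have "(Yv a n v j)^2 = (\<Sum>k<n. a (v k) j)^2 / real n"
      unfolding Yv_def power_divide by simp
    also have "(\<Sum>k<n. a (v k) j)^2 = (\<Sum>k<n. \<Sum>l<n. a (v k) j * a (v l) j)"
      unfolding power2_eq_square sum_product ..
    finally show ?thesis .
  qed
  have "En S p n (\<lambda>v. (Yv a n v j)^2) = (\<Sum>k<n. \<Sum>l<n. En S p n (\<lambda>v. a (v k) j * a (v l) j)) / real n"
    unfolding eq using En_cmult[of S p n "1 / real n" "\<lambda>v. (\<Sum>k<n. \<Sum>l<n. a (v k) j * a (v l) j)"]
    by (simp add: En_sum)
  also have "\<dots> = (\<Sum>k<n. \<Sum>l<n. (if k = l then 1 else 0)) / real n"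
    using En_pair[of S p a j, OF S ps a2 a0] by simp
  also have "\<dots> = 1" using False by simp
  finally show ?thesis using False by simp
qed

lemma inv_sqrt_lim: "(\<lambda>n. c / sqrt (real n)) \<longlonglongrightarrow> 0"
proof -
  have "(\<lambda>n. c * sqrt (inverse (real n))) \<longlonglongrightarrow> c * sqrt 0"
    by (intro tendsto_intros tendsto_inverse_0_at_top filterlim_real_sequentially)
  then show ?thesis by (simp add: real_sqrt_inverse divide_inverse)
qed

lemma cis_taylor_limit:
  "(\<lambda>n. of_nat n * (cis (x / sqrt n) - 1 - \<i> * of_real (x / sqrt n))) \<longlonglongrightarrow> complex_of_real (-(x^2)/2)"
proof -
  have b: "norm (of_nat n * (cis (x / sqrt n) - 1 - \<i> * of_real (x / sqrt n)) - complex_of_real (-(x^2)/2))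
          \<le> \<bar>x\<bar>^3 / 6 / sqrt (real n)" if n: "n > 0" for n
  proof -
    define y where "y = x / sqrt n"
    have sn: "sqrt (real n) > 0" using n by simp
    have ny: "real n * y^2 = x^2" using n by (simp add: y_def power_divide)
    have "of_nat n * (cis y - 1 - \<i> * of_real y) - complex_of_real (-(x^2)/2)
        = of_nat n * (iexp y - (\<Sum>k \<le> 2. (\<i> * y)^k / fact k))"
    proof -
      have s: "(\<Sum>k \<le> 2. (\<i> * complex_of_real y)^k / fact k) = 1 + \<i> * y - of_real (y^2) / 2"
        by (simp add: eval_nat_numeral power2_eq_square algebra_simps)
      have xe: "complex_of_real (-(x^2)/2) = - of_nat n * of_real (y^2) / 2"
        using ny by (simp flip: ny)
      show ?thesis unfolding s xe cis_conv_exp by (simp add: algebra_simps)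
    qed
    also have "norm \<dots> = real n * cmod (iexp y - (\<Sum>k \<le> 2. (\<i> * y)^k / fact k))"
      by (simp add: norm_mult)
    also have "\<dots> \<le> real n * (\<bar>y\<bar>^3 / fact 3)"
      using iexp_approx1[of y 2] by (intro mult_left_mono) (auto simp: eval_nat_numeral)
    also have "real n * (\<bar>y\<bar>^3 / fact 3) = \<bar>x\<bar>^3 / 6 / sqrt (real n)"
    proof -
      have "\<bar>y\<bar>^3 = \<bar>x\<bar>^3 / (sqrt n)^3" by (simp add: y_def power_divide abs_div)
      moreover have "(sqrt n)^3 = real n * sqrt n" using n by (simp add: eval_nat_numeral)
      ultimately show ?thesis using sn n by (simp add: fact_numeral field_simps)
    qed
    finally show ?thesis unfolding y_def .
  qed
  have "(\<lambda>n. of_nat n * (cis (x / sqrt n) - 1 - \<i> * of_real (x / sqrt n)) - complex_of_real (-(x^2)/2)) \<longlonglongrightarrow> 0"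
    by (rule Lim_null_comparison[OF _ inv_sqrt_lim[of "\<bar>x\<bar>^3 / 6"]])
       (use b in \<open>auto intro!: eventually_sequentiallyI[of 1]\<close>)
  then show ?thesis by (rule LIM_zero_cancel)
qed

lemma walk_char_limit:
  assumes S: "finite S" and pn: "\<forall>s\<in>S. p s \<ge> 0" and ps: "(\<Sum>s\<in>S. p s) = 1"
    and m0: "(\<Sum>s\<in>S. p s * \<theta> s) = 0"
  shows "(\<lambda>n. (\<Sum>s\<in>S. complex_of_real (p s) * cis (\<theta> s / sqrt n)) ^ n)
           \<longlonglongrightarrow> complex_of_real (exp (-(\<Sum>s\<in>S. p s * (\<theta> s)^2)/2))"
proof -
  define \<phi> where "\<phi> n = (\<Sum>s\<in>S. complex_of_real (p s) * cis (\<theta> s / sqrt n))" for n :: nat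
  define V where "V = (\<Sum>s\<in>S. p s * (\<theta> s)^2)"
  define c where "c = -V/2"
  have V0: "V \<ge> 0" unfolding V_def using pn by (auto intro!: sum_nonneg)
  have zeq: "of_nat n * (\<phi> n - 1) = (\<Sum>s\<in>S. complex_of_real (p s) *
       (of_nat n * (cis (\<theta> s / sqrt n) - 1 - \<i> * of_real (\<theta> s / sqrt n))))" for n
  proof -
    have "(\<Sum>s\<in>S. complex_of_real (p s) * (\<i> * of_real (\<theta> s / sqrt n)))
          = \<i> / of_real (sqrt n) * of_real (\<Sum>s\<in>S. p s * \<theta> s)"
      by (simp add: sum_distrib_left algebra_simps)
    also have "\<dots> = 0" using m0 by simp
    finally have A: "(\<Sum>s\<in>S. complex_of_real (p s) * (\<i> * of_real (\<theta> s / sqrt n))) = 0" .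
    have B: "(\<Sum>s\<in>S. complex_of_real (p s)) = 1" using ps by (simp flip: of_real_sum)
    have "\<phi> n - 1 = (\<Sum>s\<in>S. complex_of_real (p s) * (cis (\<theta> s / sqrt n) - 1 - \<i> * of_real (\<theta> s / sqrt n)))"
      unfolding \<phi>_def using A B by (simp add: algebra_simps sum_subtractf sum.distrib)
    then show ?thesis by (simp add: sum_distrib_left algebra_simps)
  qed
  have z: "(\<lambda>n. of_nat n * (\<phi> n - 1)) \<longlonglongrightarrow> complex_of_real c"
  proof -
    have "(\<lambda>n. \<Sum>s\<in>S. complex_of_real (p s) *
       (of_nat n * (cis (\<theta> s / sqrt n) - 1 - \<i> * of_real (\<theta> s / sqrt n))))
       \<longlonglongrightarrow> (\<Sum>s\<in>S. complex_of_real (p s) * complex_of_real (-((\<theta> s)^2)/2))"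
      by (intro tendsto_sum tendsto_mult_left cis_taylor_limit)
    moreover have "(\<Sum>s\<in>S. complex_of_real (p s) * complex_of_real (-((\<theta> s)^2)/2)) = complex_of_real c"
      unfolding c_def V_def of_real_sum sum_divide_distrib sum_negf[symmetric]
      by (intro sum.cong) (auto simp: of_real_mult of_real_power)
    ultimately show ?thesis unfolding zeq by simp
  qed
  have nphi: "norm (\<phi> n) \<le> 1" for n
  proof -
    have "norm (\<phi> n) \<le> (\<Sum>s\<in>S. norm (complex_of_real (p s) * cis (\<theta> s / sqrt n)))"
      unfolding \<phi>_def by (rule norm_sum)
    also have "\<dots> = (\<Sum>s\<in>S. p s)" using pn by (intro sum.cong) (auto simp: norm_mult)
    finally show ?thesis using ps by simp
  qed
  have ev: "eventually (\<lambda>n. norm (\<phi> n ^ n - (1 + complex_of_real c / of_nat n) ^ n)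
              \<le> norm (of_nat n * (\<phi> n - 1) - complex_of_real c)) sequentially"
  proof (rule eventually_sequentiallyI[of "nat \<lceil>V\<rceil> + 1"])
    fix n assume n: "nat \<lceil>V\<rceil> + 1 \<le> n"
    then have npos: "real n > 0" and nV: "V \<le> real n" using V0 by linarith+
    have "1 + complex_of_real c / of_nat n = complex_of_real (1 + c / n)" by simp
    moreover have "\<bar>1 + c / n\<bar> \<le> 1"
      using npos nV V0 unfolding c_def by (auto simp: abs_if field_simps)
    ultimately have n2: "norm (1 + complex_of_real c / of_nat n) \<le> 1" by (simp only: norm_of_real)
    have "norm (\<phi> n ^ n - (1 + complex_of_real c / of_nat n) ^ n)
          \<le> real n * norm (\<phi> n - (1 + complex_of_real c / of_nat n))"
      by (rule norm_power_diff[OF nphi n2])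
    also have "\<dots> = norm (of_nat n * (\<phi> n - (1 + complex_of_real c / of_nat n)))"
      by (simp add: norm_mult)
    also have "of_nat n * (\<phi> n - (1 + complex_of_real c / of_nat n)) = of_nat n * (\<phi> n - 1) - complex_of_real c"
      using npos by (simp add: field_simps)
    finally show "norm (\<phi> n ^ n - (1 + complex_of_real c / of_nat n) ^ n)
              \<le> norm (of_nat n * (\<phi> n - 1) - complex_of_real c)" .
  qed
  have "(\<lambda>n. norm (of_nat n * (\<phi> n - 1) - complex_of_real c)) \<longlonglongrightarrow> 0"
    using z by (simp add: tendsto_norm_zero_iff LIM_zero_iff)
  then have d: "(\<lambda>n. \<phi> n ^ n - (1 + complex_of_real c / of_nat n) ^ n) \<longlonglongrightarrow> 0"
    by (rule Lim_null_comparison[OF ev])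
  have "(\<lambda>n. complex_of_real ((1 + c / real n) ^ n)) \<longlonglongrightarrow> complex_of_real (exp c)"
    by (intro tendsto_of_real tendsto_exp_limit_sequentially)
  then have e: "(\<lambda>n. (1 + complex_of_real c / of_nat n) ^ n) \<longlonglongrightarrow> complex_of_real (exp c)"
    by simp
  have "(\<lambda>n. (\<phi> n ^ n - (1 + complex_of_real c / of_nat n) ^ n) + (1 + complex_of_real c / of_nat n) ^ n)
        \<longlonglongrightarrow> 0 + complex_of_real (exp c)"
    by (intro tendsto_add d e)
  then show ?thesis unfolding \<phi>_def c_def V_def by simp
qed

definition ef :: "nat set \<Rightarrow> (nat \<Rightarrow> real) \<Rightarrow> (nat \<Rightarrow> real) \<Rightarrow> complex" where
  "ef J t x = cis (\<Sum>j\<in>J. t j * x j)"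

definition tp :: "nat set \<Rightarrow> (complex \<times> (nat \<Rightarrow> real)) list \<Rightarrow> (nat \<Rightarrow> real) \<Rightarrow> complex" where
  "tp J xs x = (\<Sum>ct\<leftarrow>xs. fst ct * ef J (snd ct) x)"

definition mulL :: "(complex \<times> (nat \<Rightarrow> real)) list \<Rightarrow> (complex \<times> (nat \<Rightarrow> real)) list \<Rightarrow> (complex \<times> (nat \<Rightarrow> real)) list" where
  "mulL xs ys = concat (map (\<lambda>ct. map (\<lambda>ds. (fst ct * fst ds, \<lambda>j. snd ct j + snd ds j)) ys) xs)"

lemma tp_Nil[simp]: "tp J [] x = 0" by (simp add: tp_def)
lemma tp_Cons[simp]: "tp J (ct # xs) x = fst ct * ef J (snd ct) x + tp J xs x" by (simp add: tp_def)
lemma tp_append: "tp J (xs @ ys) x = tp J xs x + tp J ys x" by (simp add: tp_def)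

lemma ef_add: "ef J (\<lambda>j. t j + s j) x = ef J t x * ef J s x"
  by (simp add: ef_def cis_mult distrib_right sum.distrib)

lemma tp_mulL: "tp J (mulL xs ys) x = tp J xs x * tp J ys x"
proof (induction xs)
  case Nil then show ?case by (simp add: mulL_def)
next
  case (Cons ct xs)
  have m: "mulL (ct # xs) ys = map (\<lambda>ds. (fst ct * fst ds, \<lambda>j. snd ct j + snd ds j)) ys @ mulL xs ys"
    by (simp add: mulL_def)
  have "tp J (map (\<lambda>ds. (fst ct * fst ds, \<lambda>j. snd ct j + snd ds j)) ys) x = fst ct * ef J (snd ct) x * tp J ys x"
    by (induction ys) (auto simp: ef_add algebra_simps)
  then show ?case unfolding m tp_append Cons by (simp add: algebra_simps)
qed

definition TPJ :: "nat set \<Rightarrow> ((nat \<Rightarrow> real) \<Rightarrow> complex) set" where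
  "TPJ J = {g. \<exists>xs. \<forall>x. g x = tp J xs x}"

lemma TPJ_const: "(\<lambda>x. c) \<in> TPJ J"
  unfolding TPJ_def mem_Collect_eq by (rule exI[of _ "[(c, \<lambda>_. 0)]"]) (simp add: ef_def)

lemma TPJ_add: "f \<in> TPJ J \<Longrightarrow> g \<in> TPJ J \<Longrightarrow> (\<lambda>x. f x + g x) \<in> TPJ J"
proof -
  assume "f \<in> TPJ J" "g \<in> TPJ J"
  then obtain xs ys where "\<forall>x. f x = tp J xs x" "\<forall>x. g x = tp J ys x" unfolding TPJ_def by blast
  then show ?thesis unfolding TPJ_def mem_Collect_eq by (intro exI[of _ "xs @ ys"]) (simp add: tp_append)
qed

lemma TPJ_mult: "f \<in> TPJ J \<Longrightarrow> g \<in> TPJ J \<Longrightarrow> (\<lambda>x. f x * g x) \<in> TPJ J"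
proof -
  assume "f \<in> TPJ J" "g \<in> TPJ J"
  then obtain xs ys where "\<forall>x. f x = tp J xs x" "\<forall>x. g x = tp J ys x" unfolding TPJ_def by blast
  then show ?thesis unfolding TPJ_def mem_Collect_eq by (intro exI[of _ "mulL xs ys"]) (simp add: tp_mulL)
qed

lemma TPJ_prod: "finite I \<Longrightarrow> (\<And>i. i \<in> I \<Longrightarrow> f i \<in> TPJ J) \<Longrightarrow> (\<lambda>x. \<Prod>i\<in>I. f i x) \<in> TPJ J"
  by (induction I rule: finite_induct) (auto intro!: TPJ_mult TPJ_const)

lemma TPJ_cis:
  assumes "finite J" "j \<in> J"
  shows "(\<lambda>x. cis (\<alpha> * x j + \<beta>)) \<in> TPJ J"
proof -
  have "(\<Sum>k\<in>J. (if k = j then \<alpha> else 0) * x k) = \<alpha> * x j" for x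
    using assms by (simp add: if_distrib[of "\<lambda>z. z * _"] cong: if_cong)
  then have "cis (\<alpha> * x j + \<beta>) = tp J [(cis \<beta>, \<lambda>k. if k = j then \<alpha> else 0)] x" for x
    by (simp add: ef_def cis_mult add.commute)
  then show ?thesis unfolding TPJ_def by blast
qed

lemma TPJ_cos:
  assumes "finite J" "j \<in> J"
  shows "(\<lambda>x. complex_of_real (cos (\<alpha> * x j + \<beta>))) \<in> TPJ J"
proof -
  have eq0: "complex_of_real (cos y) = (1/2) * cis y + (1/2) * cis (-y)" for y
    by (simp add: cis.ctr complex_eq_iff)
  have eq: "complex_of_real (cos (\<alpha> * x j + \<beta>)) = (1/2) * cis (\<alpha> * x j + \<beta>) + (1/2) * cis ((-\<alpha>) * x j + (-\<beta>))" for x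
    using eq0[of "\<alpha> * x j + \<beta>"] by (simp add: minus_add_distrib)
  show ?thesis unfolding eq
    by (intro TPJ_add TPJ_mult TPJ_const TPJ_cis assms)
qed

lemma TPJ_poly_cos:
  assumes "real_polynomial_function P" "finite J" "j \<in> J"
  shows "(\<lambda>x. complex_of_real (P (cos (\<alpha> * x j + \<beta>)))) \<in> TPJ J"
  using assms(1)
proof (induction P rule: real_polynomial_function.induct)
  case (linear f)
  then obtain c where f: "f = (\<lambda>x. x * c)" by (auto simp: real_bounded_linear)
  show ?case unfolding f using TPJ_mult[OF TPJ_cos[OF assms(2,3)] TPJ_const[of "complex_of_real c"]]
    by simp
next
  case (const c) then show ?case by (simp add: TPJ_const)
next
  case (add f g) then show ?case by (simp add: TPJ_add)
next
  case (mult f g) then show ?case by (simp add: TPJ_mult)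
qed

definition Zf :: "(nat \<Rightarrow> nat \<Rightarrow> real) \<Rightarrow> nat set \<Rightarrow> (nat \<Rightarrow> real) \<Rightarrow> nat \<Rightarrow> real" where
  "Zf A J w = (\<lambda>j. \<Sum>k\<in>J. A j k * w k)"

lemma cis_borel[measurable]: "cis \<in> borel_measurable borel"
  by (intro borel_measurable_continuous_onI continuous_intros)

lemma ef_Zf_eq: "ef J t (Zf A J w) = cis (\<Sum>k\<in>J. (\<Sum>j\<in>J. t j * A j k) * w k)"
proof -
  have "(\<Sum>j\<in>J. t j * (\<Sum>k\<in>J. A j k * w k)) = (\<Sum>j\<in>J. \<Sum>k\<in>J. t j * A j k * w k)"
    by (simp add: sum_distrib_left mult.assoc)
  also have "\<dots> = (\<Sum>k\<in>J. \<Sum>j\<in>J. t j * A j k * w k)" by (rule sum.swap)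
  also have "\<dots> = (\<Sum>k\<in>J. (\<Sum>j\<in>J. t j * A j k) * w k)" by (simp add: sum_distrib_right)
  finally show ?thesis unfolding ef_def Zf_def by simp
qed

lemma ef_Zf_meas[measurable]: "(\<lambda>w. ef J t (Zf A J w)) \<in> borel_measurable (std_gauss J)"
  unfolding ef_def Zf_def std_gauss_def by measurable

lemma ef_Zf_int: "integrable (std_gauss J) (\<lambda>w. ef J t (Zf A J w))"
proof -
  interpret G: prob_space "std_gauss J" by (rule prob_space_std_gauss)
  have "norm (ef J t x) = 1" for x by (simp add: ef_def)
  then show ?thesis by (intro G.integrable_const_bound[where B=1] ef_Zf_meas) auto
qed

lemma tp_Zf_int: "integrable (std_gauss J) (\<lambda>w. tp J xs (Zf A J w))"
  by (induction xs) (auto intro!: integrable_add integrable_mult_right ef_Zf_int)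

lemma sq_sum: "(\<Sum>j\<in>J. (f j :: real))^2 = (\<Sum>j\<in>J. \<Sum>l\<in>J. f j * f l)"
  by (simp add: power2_eq_square sum_product)

lemma quad_form_eq:
  fixes A :: "nat \<Rightarrow> nat \<Rightarrow> real" and t :: "nat \<Rightarrow> real" and a :: "'b \<Rightarrow> nat \<Rightarrow> real"
  assumes S: "finite S" and J: "finite J"
    and AG: "\<forall>j\<in>J. \<forall>l\<in>J. (\<Sum>k\<in>J. A j k * A l k) = (\<Sum>s\<in>S. p s * a s j * a s l)"
  shows "(\<Sum>k\<in>J. (\<Sum>j\<in>J. t j * A j k)^2) = (\<Sum>s\<in>S. p s * (\<Sum>j\<in>J. t j * a s j)^2)"
proof -
  have "(\<Sum>k\<in>J. (\<Sum>j\<in>J. t j * A j k)^2) = (\<Sum>k\<in>J. \<Sum>j\<in>J. \<Sum>l\<in>J. t j * t l * (A j k * A l k))"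
    unfolding sq_sum by (intro sum.cong refl) (simp add: algebra_simps)
  also have "\<dots> = (\<Sum>j\<in>J. \<Sum>l\<in>J. t j * t l * (\<Sum>k\<in>J. A j k * A l k))"
  proof -
    have "(\<Sum>k\<in>J. \<Sum>j\<in>J. \<Sum>l\<in>J. t j * t l * (A j k * A l k)) = (\<Sum>j\<in>J. \<Sum>k\<in>J. \<Sum>l\<in>J. t j * t l * (A j k * A l k))"
      by (rule sum.swap)
    also have "\<dots> = (\<Sum>j\<in>J. \<Sum>l\<in>J. \<Sum>k\<in>J. t j * t l * (A j k * A l k))"
      by (intro sum.cong refl sum.swap)
    finally show ?thesis by (simp add: sum_distrib_left)
  qed
  also have "\<dots> = (\<Sum>j\<in>J. \<Sum>l\<in>J. t j * t l * (\<Sum>s\<in>S. p s * a s j * a s l))"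
    using AG by simp
  also have "\<dots> = (\<Sum>s\<in>S. \<Sum>j\<in>J. \<Sum>l\<in>J. t j * t l * (p s * a s j * a s l))"
  proof -
    have "(\<Sum>s\<in>S. \<Sum>j\<in>J. \<Sum>l\<in>J. t j * t l * (p s * a s j * a s l)) = (\<Sum>j\<in>J. \<Sum>s\<in>S. \<Sum>l\<in>J. t j * t l * (p s * a s j * a s l))"
      by (rule sum.swap)
    also have "\<dots> = (\<Sum>j\<in>J. \<Sum>l\<in>J. \<Sum>s\<in>S. t j * t l * (p s * a s j * a s l))"
      by (intro sum.cong refl sum.swap)
    finally show ?thesis by (simp add: sum_distrib_left)
  qed
  also have "\<dots> = (\<Sum>s\<in>S. p s * (\<Sum>j\<in>J. t j * a s j)^2)"
    unfolding sq_sum sum_distrib_left by (intro sum.cong refl) (simp add: algebra_simps)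
  finally show ?thesis .
qed

lemma ef_conv:
  assumes S: "finite S" and pn: "\<forall>s\<in>S. p s \<ge> 0" and ps: "(\<Sum>s\<in>S. p s) = 1"
    and a0: "\<forall>j\<in>J. (\<Sum>s\<in>S. p s * a s j) = 0" and J: "finite J"
    and AG: "\<forall>j\<in>J. \<forall>l\<in>J. (\<Sum>k\<in>J. A j k * A l k) = (\<Sum>s\<in>S. p s * a s j * a s l)"
  shows "(\<lambda>n. En S p n (\<lambda>v. ef J t (Yv a n v))) \<longlonglongrightarrow> (\<integral>w. ef J t (Zf A J w) \<partial>std_gauss J)"
proof -
  define \<theta> where "\<theta> s = (\<Sum>j\<in>J. t j * a s j)" for s
  have m0: "(\<Sum>s\<in>S. p s * \<theta> s) = 0"
  proof -
    have "(\<Sum>s\<in>S. p s * \<theta> s) = (\<Sum>s\<in>S. \<Sum>j\<in>J. t j * (p s * a s j))"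
      unfolding \<theta>_def by (simp add: sum_distrib_left algebra_simps)
    also have "\<dots> = (\<Sum>j\<in>J. \<Sum>s\<in>S. t j * (p s * a s j))" by (rule sum.swap)
    also have "\<dots> = (\<Sum>j\<in>J. t j * (\<Sum>s\<in>S. p s * a s j))" by (simp add: sum_distrib_left)
    finally
    show ?thesis using a0 by simp
  qed
  have L: "(\<lambda>n. En S p n (\<lambda>v. ef J t (Yv a n v))) = (\<lambda>n. (\<Sum>s\<in>S. complex_of_real (p s) * cis (\<theta> s / sqrt n)) ^ n)"
    unfolding ef_def \<theta>_def using En_char[OF S] by simp
  have R: "(\<integral>w. ef J t (Zf A J w) \<partial>std_gauss J) = complex_of_real (exp (-(\<Sum>s\<in>S. p s * (\<theta> s)^2)/2))"
    using gauss_char[OF J, of "\<lambda>k. \<Sum>j\<in>J. t j * A j k"] quad_form_eq[OF S J AG, of t]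
    by (simp add: ef_Zf_eq \<theta>_def)
  show ?thesis unfolding L R by (rule walk_char_limit[OF S pn ps m0])
qed

lemma TPJ_conv:
  assumes S: "finite S" and pn: "\<forall>s\<in>S. p s \<ge> 0" and ps: "(\<Sum>s\<in>S. p s) = 1"
    and a0: "\<forall>j\<in>J. (\<Sum>s\<in>S. p s * a s j) = 0" and J: "finite J"
    and AG: "\<forall>j\<in>J. \<forall>l\<in>J. (\<Sum>k\<in>J. A j k * A l k) = (\<Sum>s\<in>S. p s * a s j * a s l)"
    and g: "g \<in> TPJ J"
  shows "(\<lambda>n. En S p n (\<lambda>v. g (Yv a n v))) \<longlonglongrightarrow> (\<integral>w. g (Zf A J w) \<partial>std_gauss J)"
proof -
  obtain xs where xs: "\<And>x. g x = tp J xs x" using g unfolding TPJ_def by blast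
  have "(\<lambda>n. En S p n (\<lambda>v. tp J xs (Yv a n v))) \<longlonglongrightarrow> (\<integral>w. tp J xs (Zf A J w) \<partial>std_gauss J)"
  proof (induction xs)
    case Nil then show ?case by (simp add: En_def)
  next
    case (Cons ct xs)
    have "(\<lambda>n. fst ct * En S p n (\<lambda>v. ef J (snd ct) (Yv a n v)) + En S p n (\<lambda>v. tp J xs (Yv a n v)))
          \<longlonglongrightarrow> fst ct * (\<integral>w. ef J (snd ct) (Zf A J w) \<partial>std_gauss J) + (\<integral>w. tp J xs (Zf A J w) \<partial>std_gauss J)"
      by (intro tendsto_add tendsto_mult_left Cons ef_conv[OF S pn ps a0 J AG])
    moreover have "(\<integral>w. tp J (ct # xs) (Zf A J w) \<partial>std_gauss J)
        = fst ct * (\<integral>w. ef J (snd ct) (Zf A J w) \<partial>std_gauss J) + (\<integral>w. tp J xs (Zf A J w) \<partial>std_gauss J)"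
      by (simp add: Bochner_Integration.integral_add[OF integrable_mult_right[OF ef_Zf_int] tp_Zf_int])
    ultimately show ?case by (simp add: En_add En_cmult)
  qed
  then show ?thesis unfolding xs .
qed

lemma trig_approx:
  fixes h :: "real \<Rightarrow> real"
  assumes hc: "continuous_on {-L..L} h" and L: "L > 0" and e: "e > 0"
    and hb: "\<forall>x\<in>{-L..L}. \<bar>h x\<bar> \<le> 1"
  obtains P where "real_polynomial_function P"
    "\<forall>x\<in>{-L..L}. \<bar>P (cos (pi / (2*L) * x + pi/2)) - h x\<bar> < e"
    "\<forall>x. \<bar>P (cos (pi / (2*L) * x + pi/2))\<bar> \<le> 1 + e"
proof -
  define g where "g c = 2 * L / pi * arccos c - L" for c
  have gr: "g c \<in> {-L..L}" if "c \<in> {-1..1}" for c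
  proof -
    have "0 \<le> arccos c" "arccos c \<le> pi" using that arccos_bounded by auto
    then have "0 \<le> 2 * L / pi * arccos c" "2 * L / pi * arccos c \<le> 2 * L"
      using L pi_gt_zero by (auto simp: field_simps)
    then show ?thesis unfolding g_def by auto
  qed
  have gc: "continuous_on {-1..1} g" unfolding g_def
    by (intro continuous_intros) auto
  have Hc: "continuous_on {-1..1} (\<lambda>c. h (g c))"
    by (rule continuous_on_compose2[OF hc gc]) (use gr in auto)
  obtain P where P: "real_polynomial_function P" "\<And>c. c \<in> {-1..1} \<Longrightarrow> \<bar>h (g c) - P c\<bar> < e"
    using Stone_Weierstrass_real_polynomial_function[OF compact_Icc Hc e] by blast
  show ?thesis
  proof (rule that[OF P(1)])
    show "\<forall>x\<in>{-L..L}. \<bar>P (cos (pi / (2*L) * x + pi/2)) - h x\<bar> < e"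
    proof
      fix x assume x: "x \<in> {-L..L}"
      define y where "y = pi / (2*L) * x + pi/2"
      have yeq: "y = pi / (2*L) * (x + L)" using L by (simp add: y_def field_simps)
      have xL: "0 \<le> x + L" "x + L \<le> 2 * L" using x by auto
      have y0: "0 \<le> y" unfolding yeq using xL L pi_gt_zero by simp
      have "pi / (2*L) * (x + L) \<le> pi / (2*L) * (2 * L)"
        using xL L pi_gt_zero by (intro mult_left_mono) auto
      then have y1: "y \<le> pi" unfolding yeq using L by simp
      have "g (cos y) = 2 * L / pi * y - L"
        unfolding g_def arccos_cos[OF y0 y1] ..
      also have "\<dots> = x" unfolding yeq using L pi_gt_zero by (simp add: field_simps)
      finally have "g (cos y) = x" .
      then show "\<bar>P (cos (pi / (2*L) * x + pi/2)) - h x\<bar> < e"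
        using P(2)[of "cos y"] by (simp add: y_def abs_minus_commute)
    qed
    show "\<forall>x. \<bar>P (cos (pi / (2*L) * x + pi/2))\<bar> \<le> 1 + e"
    proof
      fix x
      define c where "c = cos (pi / (2*L) * x + pi/2)"
      have c: "c \<in> {-1..1}" unfolding c_def by auto
      have "\<bar>h (g c)\<bar> \<le> 1" using hb gr[OF c] by auto
      then show "\<bar>P (cos (pi / (2*L) * x + pi/2))\<bar> \<le> 1 + e"
        using P(2)[OF c] unfolding c_def by linarith
    qed
  qed
qed

lemma Zf_meas[measurable]: "(\<lambda>w. Zf A J w j) \<in> borel_measurable (std_gauss J)"
  unfolding Zf_def by (rule lin_meas)

lemma Z_prob:
  assumes J: "finite J" and A1: "(\<Sum>k\<in>J. (A j k)^2) = 1" and B: "B \<in> sets borel"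
  shows "measure (std_gauss J) {w \<in> space (std_gauss J). Zf A J w j \<in> B} = measure std_normal_distribution B"
proof -
  have "measure std_normal_distribution B = measure (distr (std_gauss J) borel (\<lambda>w. Zf A J w j)) B"
    using gauss_lin_normal[OF J A1] unfolding Zf_def by simp
  also have "\<dots> = measure (std_gauss J) ((\<lambda>w. Zf A J w j) -` B \<inter> space (std_gauss J))"
    using B by (subst measure_distr) auto
  finally show ?thesis by (simp add: vimage_def Int_def conj_commute)
qed

lemma sets_Zf_all[measurable]:
  "finite J \<Longrightarrow> {w \<in> space (std_gauss J). \<forall>j\<in>J. c \<le> Zf A J w j} \<in> sets (std_gauss J)"
  by measurable

lemma sets_Zf_ex[measurable]:
  "finite J \<Longrightarrow> {w \<in> space (std_gauss J). \<exists>j\<in>J. L \<le> \<bar>Zf A J w j\<bar>} \<in> sets (std_gauss J)"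
  by measurable

lemma gauss_shift_bound:
  fixes c d :: real
  assumes J: "finite J" and AJ: "\<forall>j\<in>J. (\<Sum>k\<in>J. (A j k)^2) = 1" and cd: "c \<le> d"
  shows "measure (std_gauss J) {w \<in> space (std_gauss J). \<forall>j\<in>J. c \<le> Zf A J w j}
       \<le> measure (std_gauss J) {w \<in> space (std_gauss J). \<forall>j\<in>J. d \<le> Zf A J w j} + card J * (d - c)"
proof -
  interpret G: prob_space "std_gauss J" by (rule prob_space_std_gauss)
  let ?U = "\<lambda>j. {w \<in> space (std_gauss J). Zf A J w j \<in> {x. c \<le> x \<and> x < d}}"
  have sub: "{w \<in> space (std_gauss J). \<forall>j\<in>J. c \<le> Zf A J w j}
      \<subseteq> {w \<in> space (std_gauss J). \<forall>j\<in>J. d \<le> Zf A J w j} \<union> (\<Union>j\<in>J. ?U j)"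
    by (auto simp: not_le)
  have U: "?U j \<in> G.events" for j by measurable
  have "measure (std_gauss J) {w \<in> space (std_gauss J). \<forall>j\<in>J. c \<le> Zf A J w j}
      \<le> measure (std_gauss J) ({w \<in> space (std_gauss J). \<forall>j\<in>J. d \<le> Zf A J w j} \<union> (\<Union>j\<in>J. ?U j))"
    using J U by (intro G.finite_measure_mono[OF sub]) auto
  also have "\<dots> \<le> measure (std_gauss J) {w \<in> space (std_gauss J). \<forall>j\<in>J. d \<le> Zf A J w j}
                + measure (std_gauss J) (\<Union>j\<in>J. ?U j)"
    using J U by (intro measure_Un_le) (auto simp: G.emeasure_eq_measure)
  also have "measure (std_gauss J) (\<Union>j\<in>J. ?U j) \<le> (\<Sum>j\<in>J. measure (std_gauss J) (?U j))"
    using J U by (intro G.finite_measure_subadditive_finite) auto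
  also have "\<dots> \<le> (\<Sum>j\<in>J. d - c)"
  proof (intro sum_mono)
    fix j assume j: "j \<in> J"
    have "measure (std_gauss J) (?U j) = measure std_normal_distribution {x. c \<le> x \<and> x < d}"
      using AJ j by (intro Z_prob[OF J]) auto
    also have "\<dots> \<le> d - c" by (rule N_interval[OF cd])
    finally show "measure (std_gauss J) (?U j) \<le> d - c" .
  qed
  finally show ?thesis by simp
qed

lemma gauss_tail_bound:
  fixes L :: real
  assumes J: "finite J" and AJ: "\<forall>j\<in>J. (\<Sum>k\<in>J. (A j k)^2) = 1" and L: "0 < L"
  shows "measure (std_gauss J) {w \<in> space (std_gauss J). \<exists>j\<in>J. L \<le> \<bar>Zf A J w j\<bar>} \<le> card J / L^2"
proof -
  interpret G: prob_space "std_gauss J" by (rule prob_space_std_gauss)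
  let ?U = "\<lambda>j. {w \<in> space (std_gauss J). Zf A J w j \<in> {x. L \<le> \<bar>x\<bar>}}"
  have U: "?U j \<in> G.events" for j by measurable
  have eq: "{w \<in> space (std_gauss J). \<exists>j\<in>J. L \<le> \<bar>Zf A J w j\<bar>} = (\<Union>j\<in>J. ?U j)" by auto
  have "measure (std_gauss J) (\<Union>j\<in>J. ?U j) \<le> (\<Sum>j\<in>J. measure (std_gauss J) (?U j))"
    using J U by (intro G.finite_measure_subadditive_finite) auto
  also have "\<dots> \<le> (\<Sum>j\<in>J. 1 / L^2)"
  proof (intro sum_mono)
    fix j assume j: "j \<in> J"
    have "measure (std_gauss J) (?U j) = measure std_normal_distribution {x. L \<le> \<bar>x\<bar>}"
      using AJ j by (intro Z_prob[OF J]) auto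
    also have "\<dots> \<le> 1 / L^2" by (rule N_tail[OF L])
    finally show "measure (std_gauss J) (?U j) \<le> 1 / L^2" .
  qed
  finally show ?thesis unfolding eq by simp
qed

lemma En_of_real: "En S p n (\<lambda>v. complex_of_real (f v)) = complex_of_real (En S p n f)"
  unfolding En_def by (simp add: of_real_sum)

lemma En_tail:
  fixes L :: real
  assumes S: "finite S" and pn: "\<forall>s\<in>S. p s \<ge> 0" and ps: "(\<Sum>s\<in>S. p s) = 1"
    and a2: "\<forall>s\<in>S. \<forall>j\<in>J. (a s j)^2 = 1" and a0: "\<forall>j\<in>J. (\<Sum>s\<in>S. p s * a s j) = 0"
    and J: "finite J" and L: "L > 0"
  shows "En S p n (\<lambda>v. if \<exists>j\<in>J. L \<le> \<bar>Yv a n v j\<bar> then 1 else 0) \<le> card J / L^2"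
proof -
  have pw: "(if \<exists>j\<in>J. L \<le> \<bar>Yv a n v j\<bar> then 1 else 0) \<le> (\<Sum>j\<in>J. (1 / L^2) * (Yv a n v j)^2)" for v
  proof (cases "\<exists>j\<in>J. L \<le> \<bar>Yv a n v j\<bar>")
    case True
    then obtain j where j: "j \<in> J" "L \<le> \<bar>Yv a n v j\<bar>" by blast
    have "L^2 \<le> (Yv a n v j)^2" using j L by (simp add: abs_le_square_iff[symmetric])
    then have "1 \<le> (1 / L^2) * (Yv a n v j)^2" using L by (simp add: field_simps)
    also have "\<dots> \<le> (\<Sum>j\<in>J. (1 / L^2) * (Yv a n v j)^2)"
      using J j by (intro member_le_sum) auto
    finally show ?thesis using True by simp
  next
    case False then show ?thesis by (simp add: sum_nonneg)
  qed
  have "En S p n (\<lambda>v. if \<exists>j\<in>J. L \<le> \<bar>Yv a n v j\<bar> then 1 else 0)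
      \<le> En S p n (\<lambda>v. \<Sum>j\<in>J. (1 / L^2) * (Yv a n v j)^2)"
    by (rule En_mono[OF pn pw])
  also have "\<dots> = (\<Sum>j\<in>J. (1 / L^2) * En S p n (\<lambda>v. (Yv a n v j)^2))"
    by (simp only: En_sum En_cmult)
  also have "\<dots> \<le> (\<Sum>j\<in>J. (1 / L^2) * 1)"
  proof (intro sum_mono mult_left_mono)
    fix j assume j: "j \<in> J"
    show "En S p n (\<lambda>v. (Yv a n v j)^2) \<le> 1"
      using En_second_moment[OF S ps, of a j] a2 a0 j by simp
  qed simp
  finally show ?thesis by simp
qed

lemma prod_abs_le: "finite I \<Longrightarrow> B \<ge> 0 \<Longrightarrow> (\<forall>i\<in>I. \<bar>u i\<bar> \<le> (B::real)) \<Longrightarrow> \<bar>\<Prod>i\<in>I. u i\<bar> \<le> B ^ card I"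
  by (induction I rule: finite_induct) (auto simp: abs_mult intro!: mult_mono)

lemma prod_diff_bound:
  fixes u v :: "'a \<Rightarrow> real"
  assumes "finite I" "B \<ge> 1" "\<forall>i\<in>I. \<bar>u i\<bar> \<le> B \<and> \<bar>v i\<bar> \<le> B"
  shows "\<bar>(\<Prod>i\<in>I. u i) - (\<Prod>i\<in>I. v i)\<bar> \<le> B ^ card I * (\<Sum>i\<in>I. \<bar>u i - v i\<bar>)"
  using assms
proof (induction I rule: finite_induct)
  case empty then show ?case by simp
next
  case (insert i I)
  let ?U = "\<Prod>i\<in>I. u i" and ?V = "\<Prod>i\<in>I. v i" and ?D = "\<Sum>i\<in>I. \<bar>u i - v i\<bar>"
  have IH: "\<bar>?U - ?V\<bar> \<le> B ^ card I * ?D" using insert by auto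
  have U: "\<bar>?U\<bar> \<le> B ^ card I" using insert by (intro prod_abs_le) auto
  have ui: "\<bar>v i\<bar> \<le> B" using insert by auto
  have D0: "0 \<le> ?D" by (simp add: sum_nonneg)
  have Bp: "B ^ card I \<le> B ^ Suc (card I)" using insert(4) by (simp add: power_increasing)
  have "\<bar>u i * ?U - v i * ?V\<bar> = \<bar>(u i - v i) * ?U + v i * (?U - ?V)\<bar>" by (simp add: algebra_simps)
  also have "\<dots> \<le> \<bar>u i - v i\<bar> * \<bar>?U\<bar> + \<bar>v i\<bar> * \<bar>?U - ?V\<bar>" by (simp add: abs_mult abs_triangle_ineq[THEN order_trans])
  also have "\<dots> \<le> \<bar>u i - v i\<bar> * B ^ Suc (card I) + B * (B ^ card I * ?D)"
    using U Bp IH ui by (intro add_mono mult_mono) auto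
  also have "\<dots> = B ^ Suc (card I) * (\<bar>u i - v i\<bar> + ?D)" by (simp add: algebra_simps)
  finally show ?case using insert by simp
qed

definition ramp_lo :: "real \<Rightarrow> real \<Rightarrow> real" where "ramp_lo \<delta> y = max 0 (min 1 (y / \<delta> - 1))"
definition ramp_up :: "real \<Rightarrow> real \<Rightarrow> real" where "ramp_up \<delta> y = max 0 (min 1 (y / \<delta> + 1))"

lemma ramp_lo_cont: "\<delta> \<noteq> 0 \<Longrightarrow> continuous_on S (ramp_lo \<delta>)"
  unfolding ramp_lo_def by (intro continuous_intros) auto
lemma ramp_up_cont: "\<delta> \<noteq> 0 \<Longrightarrow> continuous_on S (ramp_up \<delta>)"
  unfolding ramp_up_def by (intro continuous_intros) auto

lemma approx_prod_pw:
  fixes T r :: "real \<Rightarrow> real" and L e :: real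
  assumes J: "finite J" and Tr: "\<forall>y\<in>{-L..L}. \<bar>T y - r y\<bar> < e" and T2: "\<forall>y. \<bar>T y\<bar> \<le> 2"
    and r01: "\<forall>y. 0 \<le> r y \<and> r y \<le> 1" and e0: "0 \<le> e"
  shows "(\<Prod>j\<in>J. T (x j)) \<le> (\<Prod>j\<in>J. r (x j)) + 2 ^ card J * (card J * e) + 2 ^ Suc (card J) * (if \<exists>j\<in>J. L \<le> \<bar>x j\<bar> then 1 else 0)"
    and "(\<Prod>j\<in>J. r (x j)) - 2 ^ card J * (card J * e) - 2 ^ Suc (card J) * (if \<exists>j\<in>J. L \<le> \<bar>x j\<bar> then 1 else 0) \<le> (\<Prod>j\<in>J. T (x j))"
    and "0 \<le> (\<Prod>j\<in>J. r (x j))" "(\<Prod>j\<in>J. r (x j)) \<le> 1"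
proof -
  show R0: "0 \<le> (\<Prod>j\<in>J. r (x j))" using r01 by (intro prod_nonneg) auto
  show R1: "(\<Prod>j\<in>J. r (x j)) \<le> 1" using r01 by (intro prod_le_1) auto
  have F: "\<bar>\<Prod>j\<in>J. T (x j)\<bar> \<le> 2 ^ card J" using J T2 by (intro prod_abs_le) auto
  have pw: "\<bar>(\<Prod>j\<in>J. T (x j)) - (\<Prod>j\<in>J. r (x j))\<bar> \<le> 2 ^ card J * (card J * e)"
    if "\<not> (\<exists>j\<in>J. L \<le> \<bar>x j\<bar>)"
  proof -
    have "\<bar>(\<Prod>j\<in>J. T (x j)) - (\<Prod>j\<in>J. r (x j))\<bar> \<le> 2 ^ card J * (\<Sum>j\<in>J. \<bar>T (x j) - r (x j)\<bar>)"
      by (rule prod_diff_bound[of J 2 "\<lambda>j. T (x j)" "\<lambda>j. r (x j)"]) (use J T2 r01 in \<open>auto intro: order_trans[of _ 1]\<close>)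
    also have "(\<Sum>j\<in>J. \<bar>T (x j) - r (x j)\<bar>) \<le> (\<Sum>j\<in>J. e)"
      using that Tr by (intro sum_mono) (auto simp: not_le abs_less_iff less_imp_le)
    then have "2 ^ card J * (\<Sum>j\<in>J. \<bar>T (x j) - r (x j)\<bar>) \<le> 2 ^ card J * (card J * e)" by simp
    finally show ?thesis .
  qed
  have p2: "(2::real) ^ card J \<ge> 1" by simp
  show "(\<Prod>j\<in>J. T (x j)) \<le> (\<Prod>j\<in>J. r (x j)) + 2 ^ card J * (card J * e) + 2 ^ Suc (card J) * (if \<exists>j\<in>J. L \<le> \<bar>x j\<bar> then 1 else 0)"
  proof (cases "\<exists>j\<in>J. L \<le> \<bar>x j\<bar>")
    case True
    have a: "(\<Prod>j\<in>J. T (x j)) \<le> 2 ^ card J" using F by (simp add: abs_le_iff)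
    have b: "0 \<le> (2::real) ^ card J * (card J * e)" using e0 by simp
    have c: "(2::real) ^ Suc (card J) = 2 * 2 ^ card J" by simp
    show ?thesis unfolding if_P[OF True] c using a b R0 p2 by linarith
  next
    case False then show ?thesis unfolding if_not_P[OF False] using pw[OF False] by (simp add: abs_le_iff)
  qed
  show "(\<Prod>j\<in>J. r (x j)) - 2 ^ card J * (card J * e) - 2 ^ Suc (card J) * (if \<exists>j\<in>J. L \<le> \<bar>x j\<bar> then 1 else 0) \<le> (\<Prod>j\<in>J. T (x j))"
  proof (cases "\<exists>j\<in>J. L \<le> \<bar>x j\<bar>")
    case True
    have a: "- (2 ^ card J) \<le> (\<Prod>j\<in>J. T (x j))" using F by (simp add: abs_le_iff)
    have b: "0 \<le> (2::real) ^ card J * (card J * e)" using e0 by simp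
    have c: "(2::real) ^ Suc (card J) = 2 * 2 ^ card J" by simp
    show ?thesis unfolding if_P[OF True] c using a b R1 p2 by linarith
  next
    case False then show ?thesis unfolding if_not_P[OF False] using pw[OF False] by (simp add: abs_le_iff)
  qed
qed

lemma ramp_lo_props:
  assumes "\<delta> > 0" and J: "finite J"
  shows "\<forall>y. 0 \<le> ramp_lo \<delta> y \<and> ramp_lo \<delta> y \<le> 1"
    and "(\<Prod>j\<in>J. ramp_lo \<delta> (x j)) \<le> (if \<forall>j\<in>J. 0 < x j then 1 else 0)"
    and "(if \<forall>j\<in>J. 2 * \<delta> \<le> x j then 1 else 0) \<le> (\<Prod>j\<in>J. ramp_lo \<delta> (x j))"
proof -
  show r01: "\<forall>y. 0 \<le> ramp_lo \<delta> y \<and> ramp_lo \<delta> y \<le> 1" by (auto simp: ramp_lo_def)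
  show "(\<Prod>j\<in>J. ramp_lo \<delta> (x j)) \<le> (if \<forall>j\<in>J. 0 < x j then 1 else 0)"
  proof (cases "\<forall>j\<in>J. 0 < x j")
    case True then show ?thesis using r01 by (simp add: prod_le_1)
  next
    case False
    then obtain j where j: "j \<in> J" "x j \<le> 0" by auto
    have "x j / \<delta> \<le> 0" using j assms by (simp add: divide_nonpos_pos)
    then have "ramp_lo \<delta> (x j) = 0" by (simp add: ramp_lo_def)
    then have "(\<Prod>j\<in>J. ramp_lo \<delta> (x j)) = 0"
      using j J by (auto intro: prod_zero)
    then show ?thesis by simp
  qed
  show "(if \<forall>j\<in>J. 2 * \<delta> \<le> x j then 1 else 0) \<le> (\<Prod>j\<in>J. ramp_lo \<delta> (x j))"
  proof (cases "\<forall>j\<in>J. 2 * \<delta> \<le> x j")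
    case True
    have "ramp_lo \<delta> (x j) = 1" if "j \<in> J" for j
      using True that assms by (auto simp: ramp_lo_def field_simps)
    then show ?thesis using True by simp
  next
    case False then show ?thesis by (simp only: if_not_P[OF False]) (use r01 in \<open>auto intro!: prod_nonneg\<close>)
  qed
qed

lemma ramp_up_props:
  assumes "\<delta> > 0" and J: "finite J"
  shows "\<forall>y. 0 \<le> ramp_up \<delta> y \<and> ramp_up \<delta> y \<le> 1"
    and "(if \<forall>j\<in>J. 0 < x j then 1 else 0) \<le> (\<Prod>j\<in>J. ramp_up \<delta> (x j))"
    and "(\<Prod>j\<in>J. ramp_up \<delta> (x j)) \<le> (if \<forall>j\<in>J. - \<delta> \<le> x j then 1 else 0)"
proof -
  show r01: "\<forall>y. 0 \<le> ramp_up \<delta> y \<and> ramp_up \<delta> y \<le> 1" by (auto simp: ramp_up_def)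
  show "(if \<forall>j\<in>J. 0 < x j then 1 else 0) \<le> (\<Prod>j\<in>J. ramp_up \<delta> (x j))"
  proof (cases "\<forall>j\<in>J. 0 < x j")
    case True
    have "ramp_up \<delta> (x j) = 1" if "j \<in> J" for j
      using True that assms by (auto simp: ramp_up_def field_simps)
    then show ?thesis using True by simp
  next
    case False then show ?thesis by (simp only: if_not_P[OF False]) (use r01 in \<open>auto intro!: prod_nonneg\<close>)
  qed
  show "(\<Prod>j\<in>J. ramp_up \<delta> (x j)) \<le> (if \<forall>j\<in>J. - \<delta> \<le> x j then 1 else 0)"
  proof (cases "\<forall>j\<in>J. - \<delta> \<le> x j")
    case True then show ?thesis using r01 by (simp add: prod_le_1)
  next
    case False
    then obtain j where j: "j \<in> J" "x j < - \<delta>" by auto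
    have "x j / \<delta> < -1" using j assms by (simp add: field_simps)
    then have "ramp_up \<delta> (x j) = 0" by (simp add: ramp_up_def)
    then have "(\<Prod>j\<in>J. ramp_up \<delta> (x j)) = 0"
      using j J by (auto intro: prod_zero)
    then show ?thesis by simp
  qed
qed

lemma approx_fun_exists:
  fixes r :: "real \<Rightarrow> real" and L e :: real and J :: "nat set"
  assumes J: "finite J" and L: "L > 0" and e: "0 < e" "e \<le> 1"
    and rc: "continuous_on {-L..L} r" and r01: "\<forall>y. 0 \<le> r y \<and> r y \<le> 1"
  obtains T where "(\<lambda>x. complex_of_real (\<Prod>j\<in>J. T (x j))) \<in> TPJ J"
    "\<forall>y\<in>{-L..L}. \<bar>T y - r y\<bar> < e" "\<forall>y. \<bar>T y\<bar> \<le> 2" "T \<in> borel_measurable borel"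
proof -
  have hb: "\<forall>x\<in>{-L..L}. \<bar>r x\<bar> \<le> 1" using r01 by (simp add: abs_le_iff)
  obtain P where P: "real_polynomial_function P"
    "\<forall>x\<in>{-L..L}. \<bar>P (cos (pi / (2*L) * x + pi/2)) - r x\<bar> < e"
    "\<forall>x. \<bar>P (cos (pi / (2*L) * x + pi/2))\<bar> \<le> 1 + e"
    by (rule trig_approx[OF rc L e(1) hb])
  define T where "T y = P (cos (pi / (2*L) * y + pi/2))" for y
  show ?thesis
  proof (rule that)
    have "(\<lambda>x. \<Prod>j\<in>J. complex_of_real (T (x j))) \<in> TPJ J"
    proof (rule TPJ_prod[OF J])
      fix j assume "j \<in> J"
      then show "(\<lambda>x. complex_of_real (T (x j))) \<in> TPJ J"
        unfolding T_def by (rule TPJ_poly_cos[OF P(1) J])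
    qed
    then show "(\<lambda>x. complex_of_real (\<Prod>j\<in>J. T (x j))) \<in> TPJ J" by (simp add: of_real_prod)
    show "\<forall>y\<in>{-L..L}. \<bar>T y - r y\<bar> < e" using P(2) by (simp add: T_def)
    show "\<forall>y. \<bar>T y\<bar> \<le> 2"
    proof
      fix y show "\<bar>T y\<bar> \<le> 2" using P(3)[rule_format, of y] e(2) unfolding T_def by linarith
    qed
    have "continuous_on UNIV P"
      using continuous_real_polymonial_function[OF P(1)] by (simp add: continuous_on_eq_continuous_at)
    moreover have "continuous_on UNIV (\<lambda>y::real. cos (pi / (2*L) * y + pi/2))"
      by (intro continuous_intros)
    ultimately have "continuous_on UNIV T" unfolding T_def
      by (rule continuous_on_compose2) auto
    then show "T \<in> borel_measurable borel" by (rule borel_measurable_continuous_onI)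
  qed
qed




lemma F_conv:
  assumes S: "finite S" and pn: "\<forall>s\<in>S. p s \<ge> 0" and ps: "(\<Sum>s\<in>S. p s) = 1"
    and a0: "\<forall>j\<in>J. (\<Sum>s\<in>S. p s * a s j) = 0" and J: "finite J"
    and AG: "\<forall>j\<in>J. \<forall>l\<in>J. (\<Sum>k\<in>J. A j k * A l k) = (\<Sum>s\<in>S. p s * a s j * a s l)"
    and F: "(\<lambda>x. complex_of_real (F x)) \<in> TPJ J"
  shows "(\<lambda>n. En S p n (\<lambda>v. F (Yv a n v))) \<longlonglongrightarrow> (\<integral>w. F (Zf A J w) \<partial>std_gauss J)"
proof -
  have "(\<lambda>n. En S p n (\<lambda>v. complex_of_real (F (Yv a n v)))) \<longlonglongrightarrow> (\<integral>w. complex_of_real (F (Zf A J w)) \<partial>std_gauss J)"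
    by (rule TPJ_conv[OF S pn ps a0 J AG F])
  then show ?thesis unfolding En_of_real integral_complex_of_real tendsto_of_real_iff .
qed




lemma int_lower:
  assumes P: "prob_space M" and f: "integrable M f" and U: "U \<in> sets M" and V: "V \<in> sets M"
    and pw: "\<forall>w\<in>space M. indicator U w - K - C * indicator V w \<le> (f w :: real)"
  shows "measure M U - K - C * measure M V \<le> (\<integral>w. f w \<partial>M)"
proof -
  interpret prob_space M by (rule P)
  have iU: "integrable M (indicator U :: _ \<Rightarrow> real)" using U by (intro integrable_real_indicator) (auto simp: emeasure_eq_measure)
  have iV: "integrable M (indicator V :: _ \<Rightarrow> real)" using V by (intro integrable_real_indicator) (auto simp: emeasure_eq_measure)
  have "(\<integral>w. indicator U w - K - C * indicator V w \<partial>M) \<le> (\<integral>w. f w \<partial>M)"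
    using pw iU iV f by (intro integral_mono) auto
  moreover have "(\<integral>w. indicator U w - K - C * indicator V w \<partial>M) = measure M U - K - C * measure M V"
    using iU iV U V by (simp add: Bochner_Integration.integral_diff prob_space Int_absorb2 sets.sets_into_space)
  ultimately show ?thesis by simp
qed

lemma int_upper:
  assumes P: "prob_space M" and f: "integrable M f" and U: "U \<in> sets M" and V: "V \<in> sets M"
    and pw: "\<forall>w\<in>space M. (f w :: real) \<le> indicator U w + K + C * indicator V w"
  shows "(\<integral>w. f w \<partial>M) \<le> measure M U + K + C * measure M V"
proof -
  interpret prob_space M by (rule P)
  have iU: "integrable M (indicator U :: _ \<Rightarrow> real)" using U by (intro integrable_real_indicator) (auto simp: emeasure_eq_measure)
  have iV: "integrable M (indicator V :: _ \<Rightarrow> real)" using V by (intro integrable_real_indicator) (auto simp: emeasure_eq_measure)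
  have "(\<integral>w. f w \<partial>M) \<le> (\<integral>w. indicator U w + K + C * indicator V w \<partial>M)"
    using pw iU iV f by (intro integral_mono) auto
  moreover have "(\<integral>w. indicator U w + K + C * indicator V w \<partial>M) = measure M U + K + C * measure M V"
    using iU iV U V by (simp add: Bochner_Integration.integral_add prob_space Int_absorb2 sets.sets_into_space)
  ultimately show ?thesis by simp
qed

definition rho :: "nat \<Rightarrow> nat \<Rightarrow> nat" where "rho m k = (if k < m then m - 1 - k else k)"

lemma rho_permutes: "rho m permutes {..<m}"
proof (rule bij_imp_permutes)
  show "bij_betw (rho m) {..<m} {..<m}"
    by (rule bij_betw_byWitness[where f'="rho m"]) (auto simp: rho_def)
qed (simp add: rho_def)

lemma rev_rank_eq: "\<sigma> permutes {..<m} \<Longrightarrow> rev_rank m \<sigma> = rho m \<circ> \<sigma>"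
proof
  fix i assume s: "\<sigma> permutes {..<m}"
  show "rev_rank m \<sigma> i = (rho m \<circ> \<sigma>) i"
  proof (cases "i < m")
    case True
    then have "\<sigma> i < m" using permutes_in_image[OF s] by auto
    then show ?thesis using True by (simp add: rev_rank_def rho_def)
  next
    case False
    then have "\<sigma> i = i" using permutes_not_in[OF s] by auto
    then show ?thesis using False by (simp add: rev_rank_def rho_def)
  qed
qed

lemma rev_rank_in: "\<sigma> \<in> rankings m \<Longrightarrow> rev_rank m \<sigma> \<in> rankings m"
  unfolding rankings_def using rev_rank_eq permutes_compose[OF _ rho_permutes] by auto

lemma rev_rank_invol: "\<sigma> \<in> rankings m \<Longrightarrow> rev_rank m (rev_rank m \<sigma>) = \<sigma>"
proof
  fix i assume s: "\<sigma> \<in> rankings m"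
  then have s': "\<sigma> permutes {..<m}" by (simp add: rankings_def)
  show "rev_rank m (rev_rank m \<sigma>) i = \<sigma> i"
  proof (cases "i < m")
    case True
    then have "\<sigma> i < m" using permutes_in_image[OF s'] by auto
    then show ?thesis using True by (simp add: rev_rank_def)
  next
    case False then show ?thesis using permutes_not_in[OF s'] by (simp add: rev_rank_def)
  qed
qed

lemma rev_rank_bij: "bij_betw (rev_rank m) (rankings m) (rankings m)"
  by (rule bij_betw_byWitness[where f'="rev_rank m"]) (auto simp: rev_rank_invol rev_rank_in)

lemma pref_rev:
  assumes s: "\<sigma> \<in> rankings m" and ij: "i < m" "j < m" "i \<noteq> j"
  shows "pref (rev_rank m \<sigma>) i j = - pref \<sigma> i j"
proof -
  have s': "\<sigma> permutes {..<m}" using s by (simp add: rankings_def)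
  have lt: "\<sigma> i < m" "\<sigma> j < m" using permutes_in_image[OF s'] ij by auto
  have ne: "\<sigma> i \<noteq> \<sigma> j" using permutes_inj[OF s'] ij by (auto dest: injD)
  show ?thesis using lt ne ij by (auto simp: pref_def rev_rank_def)
qed

lemma lam_zero:
  assumes dual: "\<forall>\<sigma>\<in>rankings m. p (rev_rank m \<sigma>) = p \<sigma>" and ij: "i < m" "j < m" "i \<noteq> j"
  shows "lam p m i j = 0"
proof -
  have "lam p m i j = (\<Sum>\<sigma>\<in>rankings m. pref (rev_rank m \<sigma>) i j * p (rev_rank m \<sigma>))"
    unfolding lam_def by (rule sum.reindex_bij_betw[OF rev_rank_bij, symmetric])
  also have "\<dots> = (\<Sum>\<sigma>\<in>rankings m. - (pref \<sigma> i j * p \<sigma>))"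
    using dual pref_rev[OF _ ij] by (intro sum.cong) auto
  also have "\<dots> = - lam p m i j" unfolding lam_def by (simp add: sum_negf)
  finally show ?thesis by simp
qed

lemma gram_exists:
  fixes u :: "nat \<Rightarrow> 'b \<Rightarrow> real"
  assumes J: "finite J" and S: "finite S"
  shows "\<exists>A. \<forall>j\<in>J. \<forall>l\<in>J. (\<Sum>k\<in>J. A j k * A l k) = (\<Sum>s\<in>S. u j s * u l s)"
  using J
proof (induction J arbitrary: u rule: finite_induct)
  case empty show ?case by simp
next
  case (insert j0 J u)
  define ip where "ip x y = (\<Sum>s\<in>S. x s * y s)" for x y :: "'b \<Rightarrow> real"
  have ip_sym: "ip x y = ip y x" for x y unfolding ip_def by (simp add: mult.commute)
  have ip_lin: "ip (\<lambda>s. x s - a * z s) (\<lambda>s. y s - b * z s) = ip x y - b * ip x z - a * ip z y + a * b * ip z z"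
    for x y z a b unfolding ip_def
    by (simp add: algebra_simps sum.distrib sum_subtractf sum_distrib_left)
  define n0 where "n0 = ip (u j0) (u j0)"
  have n0ge: "n0 \<ge> 0" unfolding n0_def ip_def by (auto intro!: sum_nonneg)
  have split: "(\<Sum>k\<in>insert j0 J. f k) = f j0 + (\<Sum>k\<in>J. f k)" for f :: "nat \<Rightarrow> real"
    using insert.hyps by simp
  show ?case
  proof (cases "n0 = 0")
    case True
    have u0: "\<forall>s\<in>S. u j0 s = 0"
    proof -
      have "\<forall>s\<in>S. u j0 s * u j0 s = 0"
        using True S unfolding n0_def ip_def by (subst (asm) sum_nonneg_eq_0_iff) auto
      then show ?thesis by simp
    qed
    obtain A' where A': "\<forall>j\<in>J. \<forall>l\<in>J. (\<Sum>k\<in>J. A' j k * A' l k) = (\<Sum>s\<in>S. u j s * u l s)"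
      using insert.IH by blast
    define A where "A j k = (if j = j0 \<or> k = j0 then 0 else A' j k)" for j k
    show ?thesis
    proof (intro exI ballI)
      fix j l assume j: "j \<in> insert j0 J" and l: "l \<in> insert j0 J"
      show "(\<Sum>k\<in>insert j0 J. A j k * A l k) = (\<Sum>s\<in>S. u j s * u l s)"
      proof (cases "j = j0 \<or> l = j0")
        case True
        then have "(\<Sum>k\<in>insert j0 J. A j k * A l k) = 0" by (auto simp: A_def)
        moreover have "(\<Sum>s\<in>S. u j s * u l s) = 0" using True u0 by auto
        ultimately show ?thesis by simp
      next
        case False
        then have jl: "j \<in> J" "l \<in> J" using j l by auto
        have "(\<Sum>k\<in>insert j0 J. A j k * A l k) = (\<Sum>k\<in>J. A' j k * A' l k)"
          unfolding split using False insert.hyps(2) by (auto simp: A_def intro!: sum.cong)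
        then show ?thesis using A' jl by simp
      qed
    qed
  next
    case False
    then have n0p: "n0 > 0" using n0ge by simp
    define c where "c j = ip (u j) (u j0) / sqrt n0" for j
    define u' where "u' j s = u j s - ip (u j) (u j0) / n0 * u j0 s" for j s
    obtain A' where A': "\<forall>j\<in>J. \<forall>l\<in>J. (\<Sum>k\<in>J. A' j k * A' l k) = (\<Sum>s\<in>S. u' j s * u' l s)"
      using insert.IH by blast
    define A where "A j k = (if k = j0 then c j else if j = j0 then 0 else A' j k)" for j k
    have cc: "c j * c l = ip (u j) (u j0) * ip (u l) (u j0) / n0" for j l
      unfolding c_def using n0p by (simp add: field_simps real_sqrt_mult[symmetric])
    have u'u': "(\<Sum>s\<in>S. u' j s * u' l s) = ip (u j) (u l) - ip (u j) (u j0) * ip (u l) (u j0) / n0" for j l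
    proof -
      have "(\<Sum>s\<in>S. u' j s * u' l s) = ip (\<lambda>s. u j s - ip (u j) (u j0) / n0 * u j0 s) (\<lambda>s. u l s - ip (u l) (u j0) / n0 * u j0 s)"
        unfolding ip_def u'_def ..
      also have "\<dots> = ip (u j) (u l) - ip (u j) (u j0) * ip (u l) (u j0) / n0"
        unfolding ip_lin using n0p ip_sym[of "u j0" "u l"] by (simp add: n0_def[symmetric] field_simps power2_eq_square)
      finally show ?thesis .
    qed
    show ?thesis
    proof (intro exI ballI)
      fix j l assume j: "j \<in> insert j0 J" and l: "l \<in> insert j0 J"
      have sum_eq: "(\<Sum>k\<in>insert j0 J. A j k * A l k) = c j * c l + (\<Sum>k\<in>J. A j k * A l k)"
        unfolding split by (simp add: A_def)
      show "(\<Sum>k\<in>insert j0 J. A j k * A l k) = (\<Sum>s\<in>S. u j s * u l s)"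
      proof (cases "j = j0 \<or> l = j0")
        case True
        then have z: "(\<Sum>k\<in>J. A j k * A l k) = 0"
          using insert.hyps(2) by (auto simp: A_def intro!: sum.neutral)
        have "c j * c l = ip (u j) (u l)"
        proof (cases "j = j0")
          case True
          then show ?thesis unfolding cc using n0p by (simp add: n0_def[symmetric] ip_sym[of "u l"])
        next
          case False
          then have "l = j0" using \<open>j = j0 \<or> l = j0\<close> by simp
          then show ?thesis unfolding cc using n0p by (simp add: n0_def[symmetric])
        qed
        then show ?thesis unfolding sum_eq z ip_def by simp
      next
        case False
        then have jl: "j \<in> J" "l \<in> J" using j l by auto
        have "(\<Sum>k\<in>J. A j k * A l k) = (\<Sum>k\<in>J. A' j k * A' l k)"
          using False insert.hyps(2) jl by (auto simp: A_def intro!: sum.cong)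
        also have "\<dots> = ip (u j) (u l) - ip (u j) (u j0) * ip (u l) (u j0) / n0"
          using A' jl u'u' by simp
        finally show ?thesis unfolding sum_eq cc ip_def by simp
      qed
    qed
  qed
qed

theorem clt_orthant:
  fixes S :: "'b set" and p :: "'b \<Rightarrow> real" and a :: "'b \<Rightarrow> nat \<Rightarrow> real"
    and J :: "nat set" and A :: "nat \<Rightarrow> nat \<Rightarrow> real"
  assumes S: "finite S" and pn: "\<forall>s\<in>S. p s \<ge> 0" and ps: "(\<Sum>s\<in>S. p s) = 1"
    and a2: "\<forall>s\<in>S. \<forall>j\<in>J. (a s j)^2 = 1" and a0: "\<forall>j\<in>J. (\<Sum>s\<in>S. p s * a s j) = 0"
    and J: "finite J"
    and AG: "\<forall>j\<in>J. \<forall>l\<in>J. (\<Sum>k\<in>J. A j k * A l k) = (\<Sum>s\<in>S. p s * a s j * a s l)"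
  shows "(\<lambda>n. En S p n (\<lambda>v. if \<forall>j\<in>J. 0 < Yv a n v j then 1 else (0::real)))
          \<longlonglongrightarrow> measure (std_gauss J) {w \<in> space (std_gauss J). \<forall>j\<in>J. 0 \<le> Zf A J w j}"
proof (rule LIMSEQ_I)
  fix \<eta> :: real assume \<eta>: "0 < \<eta>"
  interpret G: prob_space "std_gauss J" by (rule prob_space_std_gauss)
  have AJ: "\<forall>j\<in>J. (\<Sum>k\<in>J. (A j k)^2) = 1"
  proof
    fix j assume j: "j \<in> J"
    have "(\<Sum>k\<in>J. (A j k)^2) = (\<Sum>s\<in>S. p s * a s j * a s j)"
      using AG j by (simp add: power2_eq_square)
    also have "\<dots> = (\<Sum>s\<in>S. p s)"
      using a2 j by (intro sum.cong) (auto simp: mult.assoc power2_eq_square)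
    finally show "(\<Sum>k\<in>J. (A j k)^2) = 1" using ps by simp
  qed
  define d where "d = card J"
  define E where "E = (2::real) ^ d"
  define C where "C = (2::real) ^ Suc d"
  define \<mu> where "\<mu> c = measure (std_gauss J) {w \<in> space (std_gauss J). \<forall>j\<in>J. c \<le> Zf A J w j}" for c
  define \<delta> where "\<delta> = \<eta> / (16 * (d + 1))"
  define e where "e = min 1 (\<eta> / (16 * E * (d + 1)))"
  define L where "L = sqrt (16 * C * (d + 1) / \<eta>) + 1"
  have E1: "E \<ge> 1" unfolding E_def by simp
  have C0: "C \<ge> 0" unfolding C_def by simp
  have \<delta>0: "\<delta> > 0" unfolding \<delta>_def using \<eta> by simp
  have e0: "0 < e" "e \<le> 1" unfolding e_def using \<eta> E1 by auto
  have q0: "0 \<le> 16 * C * (d + 1) / \<eta>" using C0 \<eta> by simp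
  have L0: "L > 0" using real_sqrt_ge_zero[OF q0] unfolding L_def by linarith
  have b1: "2 * d * \<delta> \<le> \<eta> / 8"
  proof -
    have "2 * d * \<delta> = \<eta> / 8 * (d / (d + 1))" unfolding \<delta>_def by (simp add: field_simps)
    also have "\<dots> \<le> \<eta> / 8 * 1" using \<eta> by (intro mult_left_mono) auto
    finally show ?thesis by simp
  qed
  have b2: "E * (d * e) \<le> \<eta> / 16"
  proof -
    have "E * (d * e) \<le> E * (d * (\<eta> / (16 * E * (d + 1))))"
      using E1 unfolding e_def by (intro mult_left_mono) auto
    also have "\<dots> = \<eta> / 16 * (d / (d + 1))"
    proof -
      have Ep: "E \<noteq> 0" using E1 by auto
      have dp: "real d + 1 \<noteq> 0" by linarith
      show ?thesis using Ep dp by (simp add: divide_simps)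
    qed
    also have "\<dots> \<le> \<eta> / 16 * 1" using \<eta> by (intro mult_left_mono) auto
    finally show ?thesis by simp
  qed
  have b3: "C * (d / L^2) \<le> \<eta> / 16"
  proof -
    have "16 * C * (d + 1) / \<eta> = (sqrt (16 * C * (d + 1) / \<eta>))^2" using q0 by simp
    also have "\<dots> \<le> L^2" unfolding L_def using q0 by (intro power_mono) auto
    finally have Lq: "16 * C * (d + 1) / \<eta> \<le> L^2" .
    have "C * (d / L^2) \<le> C * ((d + 1) / L^2)" using C0 L0 by (intro mult_left_mono divide_right_mono) auto
    also have "\<dots> = C * (d + 1) / L^2" by simp
    also have "\<dots> \<le> \<eta> / 16"
      using Lq L0 \<eta> by (simp add: field_simps)
    finally show ?thesis .
  qed
  define Tn where "Tn n = En S p n (\<lambda>v. if \<exists>j\<in>J. L \<le> \<bar>Yv a n v j\<bar> then 1 else (0::real))" for n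
  have Tn: "Tn n \<le> d / L^2" for n
    unfolding Tn_def d_def by (rule En_tail[OF S pn ps a2 a0 J L0])
  define Uo where "Uo = {w \<in> space (std_gauss J). \<exists>j\<in>J. L \<le> \<bar>Zf A J w j\<bar>}"
  have Uo: "Uo \<in> sets (std_gauss J)" unfolding Uo_def using J by measurable
  have muo: "measure (std_gauss J) Uo \<le> d / L^2"
    unfolding Uo_def d_def by (rule gauss_tail_bound[OF J AJ L0])
  obtain Tlo where Tlo: "(\<lambda>x. complex_of_real (\<Prod>j\<in>J. Tlo (x j))) \<in> TPJ J"
    "\<forall>y\<in>{-L..L}. \<bar>Tlo y - ramp_lo \<delta> y\<bar> < e" "\<forall>y. \<bar>Tlo y\<bar> \<le> 2" "Tlo \<in> borel_measurable borel"
    using approx_fun_exists[OF J L0 e0 ramp_lo_cont ramp_lo_props(1)] \<delta>0 by auto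
  obtain Tup where Tup: "(\<lambda>x. complex_of_real (\<Prod>j\<in>J. Tup (x j))) \<in> TPJ J"
    "\<forall>y\<in>{-L..L}. \<bar>Tup y - ramp_up \<delta> y\<bar> < e" "\<forall>y. \<bar>Tup y\<bar> \<le> 2" "Tup \<in> borel_measurable borel"
    using approx_fun_exists[OF J L0 e0 ramp_up_cont ramp_up_props(1)] \<delta>0 by auto
  define Flo where "Flo x = (\<Prod>j\<in>J. Tlo (x j))" for x
  define Fup where "Fup x = (\<Prod>j\<in>J. Tup (x j))" for x
  define K where "K = E * (d * e)"
  define Pn where "Pn n = En S p n (\<lambda>v. if \<forall>j\<in>J. 0 < Yv a n v j then 1 else (0::real))" for n
  have K: "K \<le> \<eta> / 16" unfolding K_def by (rule b2)
  have CT: "C * Tn n \<le> \<eta> / 16" for n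
    using mult_left_mono[OF Tn[of n] C0] b3 by linarith
  have Cmu: "C * measure (std_gauss J) Uo \<le> \<eta> / 16"
    using mult_left_mono[OF muo C0] b3 by linarith
  have Flo_conv: "(\<lambda>n. En S p n (\<lambda>v. Flo (Yv a n v))) \<longlonglongrightarrow> (\<integral>w. Flo (Zf A J w) \<partial>std_gauss J)"
    unfolding Flo_def by (rule F_conv[OF S pn ps a0 J AG Tlo(1)])
  have Fup_conv: "(\<lambda>n. En S p n (\<lambda>v. Fup (Yv a n v))) \<longlonglongrightarrow> (\<integral>w. Fup (Zf A J w) \<partial>std_gauss J)"
    unfolding Fup_def by (rule F_conv[OF S pn ps a0 J AG Tup(1)])
  obtain N1 where N1: "\<And>n. n \<ge> N1 \<Longrightarrow> norm (En S p n (\<lambda>v. Flo (Yv a n v)) - (\<integral>w. Flo (Zf A J w) \<partial>std_gauss J)) < \<eta> / 8"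
    using LIMSEQ_D[OF Flo_conv, of "\<eta> / 8"] \<eta> by auto
  obtain N2 where N2: "\<And>n. n \<ge> N2 \<Longrightarrow> norm (En S p n (\<lambda>v. Fup (Yv a n v)) - (\<integral>w. Fup (Zf A J w) \<partial>std_gauss J)) < \<eta> / 8"
    using LIMSEQ_D[OF Fup_conv, of "\<eta> / 8"] \<eta> by auto
  note [measurable] = Tlo(4) Tup(4)
  have Flo_int: "integrable (std_gauss J) (\<lambda>w. Flo (Zf A J w))"
  proof (rule G.integrable_const_bound[where B=E])
    show "AE w in std_gauss J. norm (Flo (Zf A J w)) \<le> E"
      unfolding Flo_def E_def d_def using J Tlo(3) by (auto intro!: prod_abs_le)
    show "(\<lambda>w. Flo (Zf A J w)) \<in> borel_measurable (std_gauss J)"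
      unfolding Flo_def using J by measurable
  qed
  have Fup_int: "integrable (std_gauss J) (\<lambda>w. Fup (Zf A J w))"
  proof (rule G.integrable_const_bound[where B=E])
    show "AE w in std_gauss J. norm (Fup (Zf A J w)) \<le> E"
      unfolding Fup_def E_def d_def using J Tup(3) by (auto intro!: prod_abs_le)
    show "(\<lambda>w. Fup (Zf A J w)) \<in> borel_measurable (std_gauss J)"
      unfolding Fup_def using J by measurable
  qed
  have e00: "0 \<le> e" using e0 by simp
  note pwlo = approx_prod_pw[OF J Tlo(2) Tlo(3) ramp_lo_props(1)[OF \<delta>0 J] e00]
  note pwup = approx_prod_pw[OF J Tup(2) Tup(3) ramp_up_props(1)[OF \<delta>0 J] e00]
  have lo1: "Flo x - K - C * (if \<exists>j\<in>J. L \<le> \<bar>x j\<bar> then 1 else 0) \<le> (if \<forall>j\<in>J. 0 < x j then 1 else 0)" for x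
    using pwlo(1)[of x] ramp_lo_props(2)[OF \<delta>0 J, of x]
    unfolding Flo_def K_def E_def C_def d_def by linarith
  have lo2: "(if \<forall>j\<in>J. 2 * \<delta> \<le> x j then 1 else 0) - K - C * (if \<exists>j\<in>J. L \<le> \<bar>x j\<bar> then 1 else 0) \<le> Flo x" for x
    using pwlo(2)[of x] ramp_lo_props(3)[OF \<delta>0 J, of x]
    unfolding Flo_def K_def E_def C_def d_def by linarith
  have up1: "(if \<forall>j\<in>J. 0 < x j then 1 else 0) \<le> Fup x + K + C * (if \<exists>j\<in>J. L \<le> \<bar>x j\<bar> then 1 else 0)" for x
    using pwup(2)[of x] ramp_up_props(2)[OF \<delta>0 J, of x]
    unfolding Fup_def K_def E_def C_def d_def by linarith
  have up2: "Fup x \<le> (if \<forall>j\<in>J. - \<delta> \<le> x j then 1 else 0) + K + C * (if \<exists>j\<in>J. L \<le> \<bar>x j\<bar> then 1 else 0)" for x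
    using pwup(1)[of x] ramp_up_props(3)[OF \<delta>0 J, of x]
    unfolding Fup_def K_def E_def C_def d_def by linarith
  define U2 where "U2 = {w \<in> space (std_gauss J). \<forall>j\<in>J. 2 * \<delta> \<le> Zf A J w j}"
  define Um where "Um = {w \<in> space (std_gauss J). \<forall>j\<in>J. - \<delta> \<le> Zf A J w j}"
  have U2: "U2 \<in> sets (std_gauss J)" unfolding U2_def using J by measurable
  have Um: "Um \<in> sets (std_gauss J)" unfolding Um_def using J by measurable
  have Ilo: "measure (std_gauss J) U2 - K - C * measure (std_gauss J) Uo \<le> (\<integral>w. Flo (Zf A J w) \<partial>std_gauss J)"
  proof (rule int_lower[OF prob_space_std_gauss Flo_int U2 Uo], intro ballI)
    fix w assume w: "w \<in> space (std_gauss J)"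
    show "indicator U2 w - K - C * indicator Uo w \<le> Flo (Zf A J w)"
    proof -
      have i1: "indicator U2 w = (if \<forall>j\<in>J. 2 * \<delta> \<le> Zf A J w j then 1 else (0::real))"
        using w unfolding U2_def by (simp add: indicator_def)
      have i2: "indicator Uo w = (if \<exists>j\<in>J. L \<le> \<bar>Zf A J w j\<bar> then 1 else (0::real))"
        using w unfolding Uo_def by (simp add: indicator_def)
      show ?thesis unfolding i1 i2 by (rule lo2)
    qed
  qed
  have Iup: "(\<integral>w. Fup (Zf A J w) \<partial>std_gauss J) \<le> measure (std_gauss J) Um + K + C * measure (std_gauss J) Uo"
  proof (rule int_upper[OF prob_space_std_gauss Fup_int Um Uo], intro ballI)
    fix w assume w: "w \<in> space (std_gauss J)"
    show "Fup (Zf A J w) \<le> indicator Um w + K + C * indicator Uo w"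
    proof -
      have i1: "indicator Um w = (if \<forall>j\<in>J. - \<delta> \<le> Zf A J w j then 1 else (0::real))"
        using w unfolding Um_def by (simp add: indicator_def)
      have i2: "indicator Uo w = (if \<exists>j\<in>J. L \<le> \<bar>Zf A J w j\<bar> then 1 else (0::real))"
        using w unfolding Uo_def by (simp add: indicator_def)
      show ?thesis unfolding i1 i2 by (rule up2)
    qed
  qed
  have m2: "\<mu> 0 \<le> measure (std_gauss J) U2 + d * (2 * \<delta> - 0)"
    unfolding \<mu>_def U2_def d_def using \<delta>0 by (intro gauss_shift_bound[OF J AJ]) simp
  have mm: "measure (std_gauss J) Um \<le> \<mu> 0 + d * (0 - - \<delta>)"
    unfolding \<mu>_def Um_def d_def using \<delta>0 by (intro gauss_shift_bound[OF J AJ]) simp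
  have Enc: "En S p n (\<lambda>v. c) = c" for n and c :: real
    using En_cmult[of S p n c "\<lambda>_. 1"] En_one[OF S ps, of n] by simp
  have Plo: "En S p n (\<lambda>v. Flo (Yv a n v)) - K - C * Tn n \<le> Pn n" for n
  proof -
    have "En S p n (\<lambda>v. Flo (Yv a n v) - K - C * (if \<exists>j\<in>J. L \<le> \<bar>Yv a n v j\<bar> then 1 else 0)) \<le> Pn n"
      unfolding Pn_def by (rule En_mono[OF pn lo1])
    moreover have "En S p n (\<lambda>v. Flo (Yv a n v) - K - C * (if \<exists>j\<in>J. L \<le> \<bar>Yv a n v j\<bar> then 1 else 0))
        = En S p n (\<lambda>v. Flo (Yv a n v)) - K - C * Tn n"
      unfolding En_diff En_cmult Enc Tn_def ..
    ultimately show ?thesis by simp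
  qed
  have Pup: "Pn n \<le> En S p n (\<lambda>v. Fup (Yv a n v)) + K + C * Tn n" for n
  proof -
    have "Pn n \<le> En S p n (\<lambda>v. Fup (Yv a n v) + K + C * (if \<exists>j\<in>J. L \<le> \<bar>Yv a n v j\<bar> then 1 else 0))"
      unfolding Pn_def by (rule En_mono[OF pn up1])
    moreover have "En S p n (\<lambda>v. Fup (Yv a n v) + K + C * (if \<exists>j\<in>J. L \<le> \<bar>Yv a n v j\<bar> then 1 else 0))
        = En S p n (\<lambda>v. Fup (Yv a n v)) + K + C * Tn n"
      unfolding En_add En_cmult Enc Tn_def ..
    ultimately show ?thesis by simp
  qed
  have dd: "d * \<delta> \<le> \<eta> / 16" using b1 by simp
  show "\<exists>no. \<forall>n\<ge>no. norm (En S p n (\<lambda>v. if \<forall>j\<in>J. 0 < Yv a n v j then 1 else (0::real))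
          - measure (std_gauss J) {w \<in> space (std_gauss J). \<forall>j\<in>J. 0 \<le> Zf A J w j}) < \<eta>"
  proof (intro exI allI impI)
    fix n assume n: "max N1 N2 \<le> n"
    have n1: "\<bar>En S p n (\<lambda>v. Flo (Yv a n v)) - (\<integral>w. Flo (Zf A J w) \<partial>std_gauss J)\<bar> < \<eta> / 8"
      using N1[of n] n by simp
    have n2: "\<bar>En S p n (\<lambda>v. Fup (Yv a n v)) - (\<integral>w. Fup (Zf A J w) \<partial>std_gauss J)\<bar> < \<eta> / 8"
      using N2[of n] n by simp
    have m2': "\<mu> 0 \<le> measure (std_gauss J) U2 + 2 * (d * \<delta>)" using m2 by (simp add: algebra_simps)
    have mm': "measure (std_gauss J) Um \<le> \<mu> 0 + d * \<delta>" using mm by simp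
    have "\<bar>Pn n - \<mu> 0\<bar> < \<eta>"
      unfolding abs_less_iff
      using Plo[of n] Pup[of n] n1[unfolded abs_less_iff] n2[unfolded abs_less_iff] Ilo Iup m2' mm' K CT[of n] Cmu dd \<eta>
      by linarith
    then show "norm (En S p n (\<lambda>v. if \<forall>j\<in>J. 0 < Yv a n v j then 1 else (0::real))
          - measure (std_gauss J) {w \<in> space (std_gauss J). \<forall>j\<in>J. 0 \<le> Zf A J w j}) < \<eta>"
      unfolding Pn_def \<mu>_def by simp
  qed
qed

lemma finite_rankings: "finite (rankings m)"
  unfolding rankings_def by (rule finite_permutations) simp

lemma count_sum:
  assumes v: "v \<in> PiE {..<n} (\<lambda>_. rankings m)"
  shows "(\<Sum>\<sigma>\<in>rankings m. f \<sigma> * real (Ncount n v \<sigma>)) = (\<Sum>k<n. f (v k))"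
proof -
  have "(\<Sum>k<n. f (v k)) = (\<Sum>\<sigma>\<in>rankings m. \<Sum>k\<in>{k \<in> {..<n}. v k = \<sigma>}. f (v k))"
    using v finite_rankings by (intro sum.group[symmetric]) (auto simp: PiE_iff)
  also have "\<dots> = (\<Sum>\<sigma>\<in>rankings m. f \<sigma> * real (Ncount n v \<sigma>))"
    unfolding Ncount_def by (intro sum.cong refl) simp
  finally show ?thesis by simp
qed

lemma pref_int: "pref \<sigma> i j = real_of_int (if \<sigma> i < \<sigma> j then 1 else -1)"
  by (simp add: pref_def)

lemma cw_iff:
  assumes v: "v \<in> PiE {..<n} (\<lambda>_. rankings m)"
  shows "condorcet_winner n m v i \<longleftrightarrow> (\<forall>j\<in>{..<m} - {i}. 0 < Yv (\<lambda>\<sigma> j. pref \<sigma> i j) n v j)"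
proof -
  have "(\<Sum>\<sigma>\<in>rankings m. pref \<sigma> i j * real (Ncount n v \<sigma>)) \<ge> 1 \<longleftrightarrow> 0 < Yv (\<lambda>\<sigma> j. pref \<sigma> i j) n v j" for j
  proof -
    define z where "z = (\<Sum>k<n. (if v k i < v k j then 1 else -1 :: int))"
    have T: "(\<Sum>\<sigma>\<in>rankings m. pref \<sigma> i j * real (Ncount n v \<sigma>)) = real_of_int z"
      unfolding count_sum[OF v] z_def pref_int by simp
    have Y: "Yv (\<lambda>\<sigma> j. pref \<sigma> i j) n v j = real_of_int z / sqrt n"
      unfolding Yv_def z_def pref_int by simp
    show ?thesis
    proof (cases "n = 0")
      case True then show ?thesis unfolding T Y z_def by simp
    next
      case False
      then have "sqrt n > 0" by simp
      moreover have "(1 \<le> z) = (0 < z)" by linarith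
      ultimately show ?thesis unfolding T Y by (simp add: zero_less_divide_iff)
    qed
  qed
  then show ?thesis unfolding condorcet_winner_def by auto
qed

lemma pref_antisym:
  assumes s: "\<sigma> \<in> rankings m" and ij: "i < m" "j < m" "i \<noteq> j"
  shows "pref \<sigma> j i = - pref \<sigma> i j"
proof -
  have s': "\<sigma> permutes {..<m}" using s by (simp add: rankings_def)
  have ne: "\<sigma> i \<noteq> \<sigma> j" using permutes_inj[OF s'] ij by (auto dest: injD)
  then show ?thesis by (auto simp: pref_def)
qed

lemma cw_unique:
  assumes v: "v \<in> PiE {..<n} (\<lambda>_. rankings m)" and i: "i < m" "i' < m" "i \<noteq> i'"
    and c: "condorcet_winner n m v i" "condorcet_winner n m v i'"
  shows False
proof -
  have a: "(\<Sum>\<sigma>\<in>rankings m. pref \<sigma> i i' * real (Ncount n v \<sigma>)) \<ge> 1"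
    using c(1) i unfolding condorcet_winner_def by auto
  have b: "(\<Sum>\<sigma>\<in>rankings m. pref \<sigma> i' i * real (Ncount n v \<sigma>)) \<ge> 1"
    using c(2) i unfolding condorcet_winner_def by auto
  have "(\<Sum>\<sigma>\<in>rankings m. pref \<sigma> i' i * real (Ncount n v \<sigma>)) = - (\<Sum>\<sigma>\<in>rankings m. pref \<sigma> i i' * real (Ncount n v \<sigma>))"
    using pref_antisym[OF _ i] by (simp add: sum_negf[symmetric])
  then show False using a b by simp
qed

lemma ind_ex_sum:
  assumes I: "finite I" and u: "\<And>i i'. i \<in> I \<Longrightarrow> i' \<in> I \<Longrightarrow> P i \<Longrightarrow> P i' \<Longrightarrow> i = i'"
  shows "(if \<exists>i\<in>I. P i then 1 else 0 :: real) = (\<Sum>i\<in>I. if P i then 1 else 0)"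
proof (cases "\<exists>i\<in>I. P i")
  case True
  then obtain i0 where i0: "i0 \<in> I" "P i0" by blast
  have "(\<Sum>i\<in>I. if P i then 1 else 0 :: real) = (\<Sum>i\<in>I. if i = i0 then 1 else 0)"
    using u i0 by (intro sum.cong) auto
  also have "\<dots> = 1" using I i0 by simp
  finally show ?thesis using True by simp
next
  case False then show ?thesis by simp
qed

lemma Pcw_decomp:
  "Pcw p n m = (\<Sum>i<m. En (rankings m) p n (\<lambda>v. if \<forall>j\<in>{..<m} - {i}. 0 < Yv (\<lambda>\<sigma> j. pref \<sigma> i j) n v j then 1 else (0::real)))"
proof -
  have "Pcw p n m = (\<Sum>v\<in>PiE {..<n} (\<lambda>_. rankings m). \<Sum>i<m. (\<Prod>k<n. p (v k)) *
          (if \<forall>j\<in>{..<m} - {i}. 0 < Yv (\<lambda>\<sigma> j. pref \<sigma> i j) n v j then 1 else 0))"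
    unfolding Pcw_def
  proof (intro sum.cong refl)
    fix v assume v: "v \<in> PiE {..<n} (\<lambda>_. rankings m)"
    have "(if \<exists>i<m. condorcet_winner n m v i then 1 else 0 :: real)
        = (\<Sum>i<m. if condorcet_winner n m v i then 1 else 0)"
    proof -
      have u: "i = i'" if "i \<in> {..<m}" "i' \<in> {..<m}" "condorcet_winner n m v i" "condorcet_winner n m v i'" for i i'
        using cw_unique[OF v, of i i'] that by auto
      have "(if \<exists>i\<in>{..<m}. condorcet_winner n m v i then 1 else 0 :: real)
          = (\<Sum>i<m. if condorcet_winner n m v i then 1 else 0)"
        by (rule ind_ex_sum[OF finite_lessThan u])
      moreover have e: "(\<exists>i\<in>{..<m}. condorcet_winner n m v i) \<longleftrightarrow> (\<exists>i<m. condorcet_winner n m v i)" by auto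
      ultimately show ?thesis by (simp only: e)
    qed
    then show "(\<Prod>k<n. p (v k)) * (if \<exists>i<m. condorcet_winner n m v i then 1 else 0)
        = (\<Sum>i<m. (\<Prod>k<n. p (v k)) * (if \<forall>j\<in>{..<m} - {i}. 0 < Yv (\<lambda>\<sigma> j. pref \<sigma> i j) n v j then 1 else 0))"
      using cw_iff[OF v] by (simp add: sum_distrib_left)
  qed
  also have "\<dots> = (\<Sum>i<m. En (rankings m) p n (\<lambda>v. if \<forall>j\<in>{..<m} - {i}. 0 < Yv (\<lambda>\<sigma> j. pref \<sigma> i j) n v j then 1 else (0::real)))"
    unfolding En_def by (subst sum.swap) simp
  finally show ?thesis .
qed

lemma pref3_eq:
  assumes s: "\<sigma> \<in> rankings m" and ijl: "i < m" "j < m" "l < m" "i \<noteq> j" "i \<noteq> l"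
  shows "pref3 \<sigma> i j l = pref \<sigma> i j * pref \<sigma> i l"
proof -
  have s': "\<sigma> permutes {..<m}" using s by (simp add: rankings_def)
  have ne: "\<sigma> i \<noteq> \<sigma> j" "\<sigma> i \<noteq> \<sigma> l" using permutes_inj[OF s'] ijl by (auto dest: injD)
  then show ?thesis by (auto simp: pref3_def pref_def)
qed

lemma pref_sq: "(pref \<sigma> i j)^2 = 1" by (simp add: pref_def)

lemma Rmat_eq:
  assumes dual: "\<forall>\<sigma>\<in>rankings m. p (rev_rank m \<sigma>) = p \<sigma>" and ps: "(\<Sum>\<sigma>\<in>rankings m. p \<sigma>) = 1"
    and i: "i < m" and j: "j \<in> {..<m} - {i}" and l: "l \<in> {..<m} - {i}"
  shows "Rmat p m i j l = (\<Sum>\<sigma>\<in>rankings m. p \<sigma> * pref \<sigma> i j * pref \<sigma> i l)"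
proof (cases "j = l")
  case True
  have "(\<Sum>\<sigma>\<in>rankings m. p \<sigma> * pref \<sigma> i j * pref \<sigma> i l) = (\<Sum>\<sigma>\<in>rankings m. p \<sigma>)"
    using True by (intro sum.cong) (auto simp: mult.assoc pref_sq[unfolded power2_eq_square])
  then show ?thesis using True ps by (simp add: Rmat_def)
next
  case False
  have l0: "lam p m i j = 0" "lam p m i l = 0" using lam_zero[OF dual] i j l by auto
  have "Rmat p m i j l = (\<Sum>\<sigma>\<in>rankings m. pref3 \<sigma> i j l * p \<sigma>)"
    using False l0 by (simp add: Rmat_def)
  also have "\<dots> = (\<Sum>\<sigma>\<in>rankings m. p \<sigma> * pref \<sigma> i j * pref \<sigma> i l)"
    using pref3_eq i j l by (intro sum.cong) auto
  finally show ?thesis .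
qed

theorem mainTheorem3:
  fixes m :: nat and p :: "(nat \<Rightarrow> nat) \<Rightarrow> real"
  assumes m2: "m \<ge> 2"
    and p_nonneg: "\<forall>\<sigma>\<in>rankings m. p \<sigma> \<ge> 0"
    and p_sum: "(\<Sum>\<sigma>\<in>rankings m. p \<sigma>) = 1"
    and dual: "\<forall>\<sigma>\<in>rankings m. p (rev_rank m \<sigma>) = p \<sigma>"
    and well_def: "\<forall>i<m. \<forall>j\<in>{..<m} - {i}. \<forall>l\<in>{..<m} - {i}. j \<noteq> l \<longrightarrow>
                     (1 - (lam p m i j)\<^sup>2) * (1 - (lam p m i l)\<^sup>2) \<noteq> 0"
  shows "(\<forall>i<m. \<forall>j<m. i \<noteq> j \<longrightarrow> lam p m i j = 0) \<and>
         (\<lambda>n. Pcw p n m) \<longlonglongrightarrow> (\<Sum>i<m. orthant_prob ({..<m} - {i}) (Rmat p m i))"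
proof
  show "\<forall>i<m. \<forall>j<m. i \<noteq> j \<longrightarrow> lam p m i j = 0" using lam_zero[OF dual] by blast
  have each: "(\<lambda>n. En (rankings m) p n (\<lambda>v. if \<forall>j\<in>{..<m} - {i}. 0 < Yv (\<lambda>\<sigma> j. pref \<sigma> i j) n v j then 1 else (0::real)))
      \<longlonglongrightarrow> orthant_prob ({..<m} - {i}) (Rmat p m i)" if i: "i < m" for i
  proof -
    define J where "J = {..<m} - {i}"
    have J: "finite J" unfolding J_def by simp
    have ex: "\<exists>A. \<forall>j\<in>J. \<forall>l\<in>J. (\<Sum>k\<in>J. A j k * A l k) = Rmat p m i j l"
    proof -
      obtain A where A: "\<forall>j\<in>J. \<forall>l\<in>J. (\<Sum>k\<in>J. A j k * A l k)
          = (\<Sum>\<sigma>\<in>rankings m. (sqrt (p \<sigma>) * pref \<sigma> i j) * (sqrt (p \<sigma>) * pref \<sigma> i l))"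
        using gram_exists[OF J finite_rankings, of "\<lambda>j \<sigma>. sqrt (p \<sigma>) * pref \<sigma> i j" m] by blast
      have "(\<Sum>\<sigma>\<in>rankings m. (sqrt (p \<sigma>) * pref \<sigma> i j) * (sqrt (p \<sigma>) * pref \<sigma> i l))
          = (\<Sum>\<sigma>\<in>rankings m. p \<sigma> * pref \<sigma> i j * pref \<sigma> i l)" for j l
        using p_nonneg by (intro sum.cong refl) (simp add: algebra_simps real_sqrt_mult_self)
      then show ?thesis using A Rmat_eq[OF dual p_sum i] unfolding J_def by (intro exI[of _ A]) auto
    qed
    define A where "A = (SOME A :: nat \<Rightarrow> nat \<Rightarrow> real. \<forall>j\<in>J. \<forall>l\<in>J. (\<Sum>k\<in>J. A j k * A l k) = Rmat p m i j l)"
    have A: "\<forall>j\<in>J. \<forall>l\<in>J. (\<Sum>k\<in>J. A j k * A l k) = Rmat p m i j l"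
      unfolding A_def by (rule someI_ex[OF ex])
    have AG: "\<forall>j\<in>J. \<forall>l\<in>J. (\<Sum>k\<in>J. A j k * A l k) = (\<Sum>\<sigma>\<in>rankings m. p \<sigma> * pref \<sigma> i j * pref \<sigma> i l)"
      using A Rmat_eq[OF dual p_sum i] unfolding J_def by auto
    have a0: "\<forall>j\<in>J. (\<Sum>\<sigma>\<in>rankings m. p \<sigma> * pref \<sigma> i j) = 0"
    proof
      fix j assume "j \<in> J"
      then have "lam p m i j = 0" using lam_zero[OF dual] i unfolding J_def by auto
      then show "(\<Sum>\<sigma>\<in>rankings m. p \<sigma> * pref \<sigma> i j) = 0" unfolding lam_def by (simp add: mult.commute)
    qed
    have a2: "\<forall>\<sigma>\<in>rankings m. \<forall>j\<in>J. (pref \<sigma> i j)^2 = 1" by (simp add: pref_sq)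
    have "(\<lambda>n. En (rankings m) p n (\<lambda>v. if \<forall>j\<in>J. 0 < Yv (\<lambda>\<sigma> j. pref \<sigma> i j) n v j then 1 else (0::real)))
      \<longlonglongrightarrow> measure (std_gauss J) {w \<in> space (std_gauss J). \<forall>j\<in>J. 0 \<le> Zf A J w j}"
      by (rule clt_orthant[OF finite_rankings p_nonneg p_sum a2 a0 J AG])
    moreover have "orthant_prob J (Rmat p m i) = measure (std_gauss J) {w \<in> space (std_gauss J). \<forall>j\<in>J. 0 \<le> Zf A J w j}"
      unfolding orthant_prob_def A_def[symmetric] Let_def Zf_def by simp
    ultimately show ?thesis unfolding J_def by simp
  qed
  have "(\<lambda>n. \<Sum>i<m. En (rankings m) p n (\<lambda>v. if \<forall>j\<in>{..<m} - {i}. 0 < Yv (\<lambda>\<sigma> j. pref \<sigma> i j) n v j then 1 else (0::real)))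
      \<longlonglongrightarrow> (\<Sum>i<m. orthant_prob ({..<m} - {i}) (Rmat p m i))"
    by (intro tendsto_sum each) simp
  then show "(\<lambda>n. Pcw p n m) \<longlonglongrightarrow> (\<Sum>i<m. orthant_prob ({..<m} - {i}) (Rmat p m i))"
    unfolding Pcw_decomp .
qed

end
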